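(* Let $\mathcal{A}$ be a hyperplane arrangement in $\mathbb{P}^3(\mathbb{R})$ consisting of $n$ hyperplanes. Write $h:=\sum_{i \geq 2} (i-1) h^\mathcal{A}_i$ and $g^\mathcal{A}_1:=\sum_{i \geq 2} h^\mathcal{A}_i$. Then: (i) The characteristic polynomial of $\mathcal{A}$ is $$\chi(\mathcal{A},t)=(t-1)\left( t^3+(1-n)t^2+(h+1-n)t+ h + 1 -f^\mathcal{A}_3 \right).$$ (ii) All roots of $\chi(\mathcal{A},t)$ are real if and only if the following three relations hold: $$h=\sum_{i \geq 2} (i-1) h^\mathcal{A}_i= \sum_{H \in \mathcal{A}} |\mathcal{A}^H| -g^\mathcal{A}_1\leq \left \lfloor \frac{(n+2)(n-1)}{3} \right \rfloor , \tag{1}$$ $$f^\mathcal{A}_3 \leq \left \lfloor\frac{(9n+18)h + 20 + 12n + 2 \sqrt{(n^2+n-2-3h )^3}-2n^3-3n^2 }{27} \right \rfloor, \tag{2}$$ $$f^\mathcal{A}_3 \geq \left \lceil \frac{(9n+18)h + 20 + 12n - 2 \sqrt{(n^2+n-2-3h )^3}-2n^3-3n^2 }{27} \right \rceil. \tag{3}$$ Moreover, the estimates (1), (2), (3) are tight: there exists an arrangement in $\mathbb{P}^3(\mathbb{R})$ for which equality holds in each of (1), (2) and (3).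
   Context: An arrangement in $\mathbb{P}^3=\mathbb{P}^3(\mathbb{R})$ is a finite set $\mathcal{A}$ of projective hyperplanes (images of linear hyperplanes of $\mathbb{R}^4$) with empty common intersection; $n=|\mathcal{A}|$. $\mathcal{A}$ induces a cell decomposition of $\mathbb{P}^3$; $f^\mathcal{A}_i$ is the number of its $i$-dimensional cells, so $f^\mathcal{A}_3$ is the number of chambers. The intersection lattice $L$ consists of all subspaces of $\mathbb{R}^4$ that are intersections of the corresponding linear hyperplanes, ordered by reverse inclusion, with Möbius function $\mu$; the characteristic polynomial is $\chi(\mathcal{A},t)=\sum_{X\in L}\mu(\mathbb{R}^4,X)t^{\dim X}$. A line of $\mathcal{A}$ is an element of $L$ of dimension $2$; its weight is the number of hyperplanes of $\mathcal{A}$ containing it, and $h^\mathcal{A}_i$ denotes the number of lines of weight $i$ ($i\ge 2$). For $H\in\mathcal{A}$, the restriction $\mathcal{A}^H$ is the arrangement in $\mathbb{P}^2$ formed by the codimension-two elements of $L$ contained in $H$, and $|\mathcal{A}^H|$ is its number of lines. *)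

theory Defs
  imports "HOL-Analysis.Analysis" "HOL-Computational_Algebra.Polynomial"
begin

text \<open>A (central, essential) arrangement in P^3(R), represented by the corresponding
  linear hyperplanes of R^4.  The condition that the projective hyperplanes have empty
  common intersection is that the linear hyperplanes intersect in the origin only.\<close>
definition is_arrangement :: "(real^4) set set \<Rightarrow> bool" where
  "is_arrangement A \<longleftrightarrow> finite A \<and>
     (\<forall>H\<in>A. \<exists>a::real^4. a \<noteq> 0 \<and> H = {x. a \<bullet> x = 0}) \<and> \<Inter>A = {0}"

definition int_lattice :: "(real^4) set set \<Rightarrow> (real^4) set set" where
  "int_lattice A = {\<Inter>B | B. B \<subseteq> A}"

text \<open>Moebius function mu(V, X) of a finite family L ordered by reverse inclusion, with
  bottom element V: mu(V,V) = 1 and mu(V,X) = - sum over V <= Y < X of mu(V,Y), i.e.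
  over Y in L with X strictly contained in Y (and Y contained in V); zero outside L.\<close>
definition mobius_from :: "'a set set \<Rightarrow> 'a set \<Rightarrow> 'a set \<Rightarrow> int" where
  "mobius_from L V = (THE m. (\<forall>X. X \<notin> L \<longrightarrow> m X = 0) \<and>
      (\<forall>X\<in>L. m X = (if X = V then 1
                       else - (\<Sum>Y\<in>{Y\<in>L. X \<subset> Y \<and> Y \<subseteq> V}. m Y))))"

definition char_poly :: "(real^4) set set \<Rightarrow> real poly" where
  "char_poly A = (\<Sum>X\<in>int_lattice A.
      monom (of_int (mobius_from (int_lattice A) UNIV X)) (dim X))"

text \<open>Lines of the arrangement: elements of L of (linear) dimension 2.\<close>
definition lines :: "(real^4) set set \<Rightarrow> (real^4) set set" where
  "lines A = {X\<in>int_lattice A. dim X = 2}"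

definition weight :: "(real^4) set set \<Rightarrow> (real^4) set \<Rightarrow> nat" where
  "weight A X = card {H\<in>A. X \<subseteq> H}"

definition h_count :: "(real^4) set set \<Rightarrow> nat \<Rightarrow> nat" where
  "h_count A i = card {X\<in>lines A. weight A X = i}"

definition restr_card :: "(real^4) set set \<Rightarrow> (real^4) set \<Rightarrow> nat" where
  "restr_card A H = card {X\<in>lines A. X \<subseteq> H}"

text \<open>Chambers of the projective arrangement: each is the image in P^3 of a pair of
  antipodal connected components of the complement of the union of the linear hyperplanes
  in R^4; we represent it by the union of that antipodal pair (its cone in R^4 minus 0).\<close>
definition chambers :: "(real^4) set set \<Rightarrow> (real^4) set set" where
  "chambers A = (\<lambda>C. C \<union> uminus ` C) ` components (- \<Union>A)"

definition f3 :: "(real^4) set set \<Rightarrow> nat" where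
  "f3 A = card (chambers A)"

end

theory Submission
  imports Defs
begin


definition sig :: "('i \<Rightarrow> 'a::euclidean_space) \<Rightarrow> 'i set \<Rightarrow> 'a \<Rightarrow> ('i \<Rightarrow> real)" where
  "sig a F x = restrict (\<lambda>K. sgn (a K \<bullet> x)) F"

definition sv :: "'a::euclidean_space set \<Rightarrow> 'i set \<Rightarrow> ('i \<Rightarrow> 'a) \<Rightarrow> ('i \<Rightarrow> real) set" where
  "sv V F a = sig a F ` {x\<in>V. \<forall>K\<in>F. a K \<bullet> x \<noteq> 0}"

definition wsum :: "'a::euclidean_space set \<Rightarrow> 'i set \<Rightarrow> ('i \<Rightarrow> 'a) \<Rightarrow> int" where
  "wsum V F a = (\<Sum>B\<in>Pow F. (-1::int)^(card B + dim (V \<inter> {x. \<forall>K\<in>B. a K \<bullet> x = 0})))"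

lemma sgn_add_small:
  fixes \<alpha> \<beta> :: real
  assumes "\<bar>\<beta>\<bar> < \<bar>\<alpha>\<bar>" shows "sgn (\<alpha> + \<beta>) = sgn \<alpha>"
  using assms by (auto simp: sgn_if abs_if split: if_splits)

lemma perturb:
  fixes a :: "'i \<Rightarrow> 'a::euclidean_space"
  assumes "finite F" "\<forall>K\<in>F. a K \<bullet> x \<noteq> 0"
  shows "\<exists>e>0. \<forall>t. \<bar>t\<bar> \<le> e \<longrightarrow> (\<forall>K\<in>F. sgn (a K \<bullet> (x + t *\<^sub>R v)) = sgn (a K \<bullet> x))"
proof -
  define e where "e = Min (insert 1 ((\<lambda>K. \<bar>a K \<bullet> x\<bar> / (\<bar>a K \<bullet> v\<bar> + 1)) ` F))"
  have fin: "finite (insert 1 ((\<lambda>K. \<bar>a K \<bullet> x\<bar> / (\<bar>a K \<bullet> v\<bar> + 1)) ` F))" using assms by simp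
  have epos: "e > 0" unfolding e_def using fin assms(2)
    by (subst Min_gr_iff) (auto intro!: divide_pos_pos)
  have ele: "e \<le> \<bar>a K \<bullet> x\<bar> / (\<bar>a K \<bullet> v\<bar> + 1)" if "K \<in> F" for K
    unfolding e_def using fin that by (intro Min_le) auto
  show ?thesis
  proof (intro exI[of _ e] conjI allI impI ballI)
    fix t K assume t: "\<bar>t\<bar> \<le> e" and K: "K \<in> F"
    have ax: "\<bar>a K \<bullet> x\<bar> > 0" using assms(2) K by auto
    have "\<bar>t * (a K \<bullet> v)\<bar> \<le> e * \<bar>a K \<bullet> v\<bar>"
      using t by (simp add: abs_mult mult_right_mono)
    also have "\<dots> \<le> \<bar>a K \<bullet> x\<bar> / (\<bar>a K \<bullet> v\<bar> + 1) * \<bar>a K \<bullet> v\<bar>"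
      using mult_right_mono[OF ele[OF K] abs_ge_zero] by simp
    also have "\<dots> < \<bar>a K \<bullet> x\<bar>"
    proof -
      have "\<bar>a K \<bullet> v\<bar> / (\<bar>a K \<bullet> v\<bar> + 1) < 1" by simp
      then have "\<bar>a K \<bullet> x\<bar> * (\<bar>a K \<bullet> v\<bar> / (\<bar>a K \<bullet> v\<bar> + 1)) < \<bar>a K \<bullet> x\<bar> * 1"
        using ax by (intro mult_strict_left_mono) auto
      then show ?thesis by (simp add: field_simps)
    qed
    finally have "\<bar>t * (a K \<bullet> v)\<bar> < \<bar>a K \<bullet> x\<bar>" .
    then show "sgn (a K \<bullet> (x + t *\<^sub>R v)) = sgn (a K \<bullet> x)"
      by (simp add: inner_add_right sgn_add_small)
  qed (rule epos)
qed

lemma sgn_comb: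
  fixes p q l m :: real
  assumes "sgn p = sgn q" "p \<noteq> 0" "l > 0" "m > 0"
  shows "sgn (l * p + m * q) = sgn p"
proof (cases "p > 0")
  case True then have "q > 0" using assms by (auto simp: sgn_if split: if_splits)
  then have "l * p > 0" "m * q > 0" using True assms by auto
  then show ?thesis using True by (simp add: sgn_if)
next
  case False then have "p < 0" using assms by auto
  then have "q < 0" using assms by (auto simp: sgn_if split: if_splits)
  have "l * p < 0" "m * q < 0" using \<open>p<0\<close> \<open>q<0\<close> assms by (auto simp: mult_pos_neg)
  then show ?thesis using \<open>p<0\<close> by (simp add: sgn_if)
qed

lemma finite_sv: "finite F \<Longrightarrow> finite (sv V F a)"
proof -
  assume F: "finite F"
  have "sv V F a \<subseteq> PiE F (\<lambda>_. {-1, 0, 1::real})"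
    by (auto simp: sv_def sig_def sgn_real_def split: if_splits)
  moreover have "finite (PiE F (\<lambda>_. {-1, 0, 1::real}))" using F by (simp add: finite_PiE)
  ultimately show ?thesis by (rule finite_subset)
qed

lemma dim_hyp_sub:
  fixes V :: "'a::euclidean_space set"
  assumes V: "subspace V" and v: "v \<in> V" "b \<bullet> v \<noteq> 0"
  shows "dim (V \<inter> {x. b \<bullet> x = 0}) + 1 = dim V"
proof -
  let ?H = "V \<inter> {x. b \<bullet> x = 0}"
  have sH: "subspace ?H" using V by (simp add: subspace_inter subspace_hyperplane)
  have "span ?H = ?H" using sH by (simp only: span_eq_iff)
  moreover have "v \<notin> ?H" using v by auto
  ultimately have vn: "v \<notin> span ?H" by metis
  have "span (insert v ?H) = V"
  proof
    show "span (insert v ?H) \<subseteq> V" by (rule span_minimal) (use V v in auto)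
    show "V \<subseteq> span (insert v ?H)"
    proof
      fix x assume x: "x \<in> V"
      define c where "c = (b \<bullet> x) / (b \<bullet> v)"
      have "x - c *\<^sub>R v \<in> V" using x v V by (simp add: subspace_diff subspace_scale)
      moreover have "b \<bullet> (x - c *\<^sub>R v) = 0" using v by (simp add: c_def inner_diff_right)
      ultimately have "x - c *\<^sub>R v \<in> ?H" by simp
      then have "x - c *\<^sub>R v \<in> span (insert v ?H)" by (auto intro: span_base)
      moreover have "c *\<^sub>R v \<in> span (insert v ?H)" by (auto intro: span_scale span_base)
      ultimately have "(x - c *\<^sub>R v) + c *\<^sub>R v \<in> span (insert v ?H)" by (rule span_add)
      then show "x \<in> span (insert v ?H)" by simp
    qed
  qed
  then have "dim V = dim (insert v ?H)" by (metis dim_span)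
  also have "\<dots> = dim ?H + 1" using vn by (simp add: dim_insert)
  finally show ?thesis by simp
qed

lemma card_split:
  fixes V :: "'a::euclidean_space set" and a :: "'i \<Rightarrow> 'a"
  assumes V: "subspace V" and F: "finite F" and i: "i \<notin> F"
    and v: "v \<in> V" "a i \<bullet> v > 0"
  shows "card (sv V (insert i F) a) = card (sv V F a) + card (sv (V \<inter> {x. a i \<bullet> x = 0}) F a)"
proof -
  let ?S = "sv V (insert i F) a"
  let ?P = "{\<sigma>\<in>?S. \<sigma> i = 1}"
  let ?M = "{\<sigma>\<in>?S. \<sigma> i = -1}"
  let ?H = "V \<inter> {x. a i \<bullet> x = 0}"
  define \<rho> where "\<rho> = (\<lambda>\<sigma>::'i\<Rightarrow>real. restrict \<sigma> F)"
  have finS: "finite ?S" using F by (simp add: finite_sv)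
  have SPM: "?S = ?P \<union> ?M"
    by (auto simp: sv_def sig_def sgn_if split: if_splits)
  have cardS: "card ?S = card ?P + card ?M"
    using finS by (subst SPM, subst card_Un_disjoint) auto
  have injP: "inj_on \<rho> ?P" and injM: "inj_on \<rho> ?M"
    unfolding inj_on_def \<rho>_def
    by (auto simp: sv_def sig_def fun_eq_iff restrict_def split: if_splits; metis)+
  have rs: "\<rho> (sig a (insert i F) x) = sig a F x" for x
    by (auto simp: \<rho>_def sig_def restrict_def fun_eq_iff)
  have imP: "\<rho> ` ?P = sig a F ` {x\<in>V. (\<forall>K\<in>F. a K \<bullet> x \<noteq> 0) \<and> a i \<bullet> x > 0}"
  proof -
    have "?P = sig a (insert i F) ` {x\<in>V. (\<forall>K\<in>F. a K \<bullet> x \<noteq> 0) \<and> a i \<bullet> x > 0}"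
      by (auto simp: sv_def sig_def sgn_if split: if_splits)
    then show ?thesis by (simp add: image_image rs)
  qed
  have imM: "\<rho> ` ?M = sig a F ` {x\<in>V. (\<forall>K\<in>F. a K \<bullet> x \<noteq> 0) \<and> a i \<bullet> x < 0}"
  proof -
    have "?M = sig a (insert i F) ` {x\<in>V. (\<forall>K\<in>F. a K \<bullet> x \<noteq> 0) \<and> a i \<bullet> x < 0}"
      by (auto simp: sv_def sig_def sgn_if split: if_splits)
    then show ?thesis by (simp add: image_image rs)
  qed
  have pert: "\<exists>e>0. x + e *\<^sub>R v \<in> V \<and> x - e *\<^sub>R v \<in> V \<and> sig a F (x + e *\<^sub>R v) = sig a F x
       \<and> sig a F (x - e *\<^sub>R v) = sig a F x
       \<and> (\<forall>K\<in>F. a K \<bullet> (x + e *\<^sub>R v) \<noteq> 0) \<and> (\<forall>K\<in>F. a K \<bullet> (x - e *\<^sub>R v) \<noteq> 0)"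
    if x: "x \<in> V" "\<forall>K\<in>F. a K \<bullet> x \<noteq> 0" for x
  proof -
    obtain e where e: "e > 0" "\<And>t. \<bar>t\<bar> \<le> e \<Longrightarrow> (\<forall>K\<in>F. sgn (a K \<bullet> (x + t *\<^sub>R v)) = sgn (a K \<bullet> x))"
      using perturb[OF F x(2), of v] by blast
    have p: "\<forall>K\<in>F. sgn (a K \<bullet> (x + e *\<^sub>R v)) = sgn (a K \<bullet> x)" using e by simp
    have m: "\<forall>K\<in>F. sgn (a K \<bullet> (x + (-e) *\<^sub>R v)) = sgn (a K \<bullet> x)" using e(2)[of "-e"] e(1) by simp
    show ?thesis
    proof (intro exI[of _ e] conjI)
      show "x + e *\<^sub>R v \<in> V" "x - e *\<^sub>R v \<in> V" using V x v
        by (auto simp: subspace_add subspace_diff subspace_scale)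
      show "sig a F (x + e *\<^sub>R v) = sig a F x" using p by (auto simp: sig_def restrict_def)
      show "sig a F (x - e *\<^sub>R v) = sig a F x" using m by (auto simp: sig_def restrict_def)
      show "\<forall>K\<in>F. a K \<bullet> (x + e *\<^sub>R v) \<noteq> 0" using p x(2) by (metis sgn_0_0 sgn_zero_iff)
      show "\<forall>K\<in>F. a K \<bullet> (x - e *\<^sub>R v) \<noteq> 0" using m x(2) by (metis sgn_0_0 sgn_zero_iff scaleR_minus_left diff_conv_add_uminus)
    qed (use e in auto)
  qed
  have un: "\<rho> ` ?P \<union> \<rho> ` ?M = sv V F a"
  proof
    show "\<rho> ` ?P \<union> \<rho> ` ?M \<subseteq> sv V F a" by (subst imP, subst imM) (auto simp: sv_def)
    show "sv V F a \<subseteq> \<rho> ` ?P \<union> \<rho> ` ?M"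
    proof
      fix \<sigma> assume "\<sigma> \<in> sv V F a"
      then obtain x where x: "x \<in> V" "\<forall>K\<in>F. a K \<bullet> x \<noteq> 0" "\<sigma> = sig a F x" by (auto simp: sv_def)
      consider "a i \<bullet> x > 0" | "a i \<bullet> x < 0" | "a i \<bullet> x = 0" by linarith
      then show "\<sigma> \<in> \<rho> ` ?P \<union> \<rho> ` ?M"
      proof cases
        case 3
        obtain e where e: "e > 0" "x + e *\<^sub>R v \<in> V" "sig a F (x + e *\<^sub>R v) = sig a F x"
          "\<forall>K\<in>F. a K \<bullet> (x + e *\<^sub>R v) \<noteq> 0" using pert[OF x(1,2)] by blast
        have "a i \<bullet> (x + e *\<^sub>R v) > 0" using 3 e(1) v by (simp add: inner_add_right)
        then show ?thesis unfolding imP imM using e x by (auto intro!: image_eqI[of _ _ "x + e *\<^sub>R v"])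
      qed (use x in \<open>auto simp: imP imM\<close>)
    qed
  qed
  have int: "\<rho> ` ?P \<inter> \<rho> ` ?M = sv ?H F a"
  proof
    show "sv ?H F a \<subseteq> \<rho> ` ?P \<inter> \<rho> ` ?M"
    proof
      fix \<sigma> assume "\<sigma> \<in> sv ?H F a"
      then obtain x where x: "x \<in> V" "a i \<bullet> x = 0" "\<forall>K\<in>F. a K \<bullet> x \<noteq> 0" "\<sigma> = sig a F x" by (auto simp: sv_def)
      obtain e where e: "e > 0" "x + e *\<^sub>R v \<in> V" "x - e *\<^sub>R v \<in> V" "sig a F (x + e *\<^sub>R v) = sig a F x"
        "sig a F (x - e *\<^sub>R v) = sig a F x"
        "\<forall>K\<in>F. a K \<bullet> (x + e *\<^sub>R v) \<noteq> 0" "\<forall>K\<in>F. a K \<bullet> (x - e *\<^sub>R v) \<noteq> 0" using pert[OF x(1,3)] by blast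
      have "a i \<bullet> (x + e *\<^sub>R v) > 0" "a i \<bullet> (x - e *\<^sub>R v) < 0" using x(2) e(1) v by (simp_all add: inner_add_right inner_diff_right)
      then have "\<sigma> \<in> \<rho> ` ?P" "\<sigma> \<in> \<rho> ` ?M" unfolding imP imM
      proof -
        assume h: "a i \<bullet> (x + e *\<^sub>R v) > 0" "a i \<bullet> (x - e *\<^sub>R v) < 0"
        show "\<sigma> \<in> sig a F ` {x\<in>V. (\<forall>K\<in>F. a K \<bullet> x \<noteq> 0) \<and> a i \<bullet> x > 0}"
          by (rule image_eqI[of _ _ "x + e *\<^sub>R v"]) (use e x h in auto)
        show "\<sigma> \<in> sig a F ` {x\<in>V. (\<forall>K\<in>F. a K \<bullet> x \<noteq> 0) \<and> a i \<bullet> x < 0}"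
          by (rule image_eqI[of _ _ "x - e *\<^sub>R v"]) (use e x h in auto)
      qed
      then show "\<sigma> \<in> \<rho> ` ?P \<inter> \<rho> ` ?M" by blast
    qed
    show "\<rho> ` ?P \<inter> \<rho> ` ?M \<subseteq> sv ?H F a"
    proof
      fix \<sigma> assume "\<sigma> \<in> \<rho> ` ?P \<inter> \<rho> ` ?M"
      then obtain x1 x2 where x1: "x1 \<in> V" "\<forall>K\<in>F. a K \<bullet> x1 \<noteq> 0" "a i \<bullet> x1 > 0" "\<sigma> = sig a F x1"
        and x2: "x2 \<in> V" "\<forall>K\<in>F. a K \<bullet> x2 \<noteq> 0" "a i \<bullet> x2 < 0" "\<sigma> = sig a F x2"
        unfolding imP imM by auto
      define p1 where "p1 = a i \<bullet> x1"
      define p2 where "p2 = a i \<bullet> x2"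
      have pp: "p1 > 0" "p2 < 0" "p1 - p2 > 0" using x1 x2 by (auto simp: p1_def p2_def)
      define y where "y = (p1 / (p1 - p2)) *\<^sub>R x2 + (- p2 / (p1 - p2)) *\<^sub>R x1"
      have yV: "y \<in> V" unfolding y_def using V x1(1) x2(1) by (intro subspace_add subspace_scale) auto
      have "a i \<bullet> y = (p1 / (p1 - p2)) * p2 + (- p2 / (p1 - p2)) * p1"
        unfolding y_def p1_def p2_def by (simp only: inner_add_right inner_scaleR_right)
      also have "\<dots> = 0" using pp by (simp add: field_simps)
      finally have yi: "a i \<bullet> y = 0" .
      have sg: "sgn (a K \<bullet> y) = sgn (a K \<bullet> x2)" if K: "K \<in> F" for K
      proof -
        have "sgn (a K \<bullet> x2) = sgn (a K \<bullet> x1)" using x1(4) x2(4) K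
          by (auto simp: sig_def restrict_def fun_eq_iff) (metis)
        then have "sgn ((p1 / (p1 - p2)) * (a K \<bullet> x2) + (- p2 / (p1 - p2)) * (a K \<bullet> x1)) = sgn (a K \<bullet> x2)"
        proof (rule sgn_comb)
          show "p1 / (p1 - p2) > 0" "- p2 / (p1 - p2) > 0" using pp by (auto intro: divide_pos_pos divide_neg_pos)
        qed (use pp x2(2) K in auto)
        then show ?thesis unfolding y_def by (simp only: inner_add_right inner_scaleR_right)
      qed
      have "\<sigma> = sig a F y" using x2(4) sg by (auto simp: sig_def restrict_def fun_eq_iff)
      moreover have "\<forall>K\<in>F. a K \<bullet> y \<noteq> 0" using sg x2(2) by (metis sgn_zero_iff)
      ultimately show "\<sigma> \<in> sv ?H F a" using yV yi by (auto simp: sv_def)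
    qed
  qed
  have finP: "finite (\<rho> ` ?P)" "finite (\<rho> ` ?M)" using finS by auto
  have "card ?S = card (\<rho> ` ?P) + card (\<rho> ` ?M)"
    using cardS card_image[OF injP] card_image[OF injM] by simp
  also have "\<dots> = card (\<rho> ` ?P \<union> \<rho> ` ?M) + card (\<rho> ` ?P \<inter> \<rho> ` ?M)"
    using card_Un_Int[OF finP] .
  finally show ?thesis using un int by simp
qed


lemma wsum_insert:
  assumes F: "finite F" and i: "i \<notin> F"
  shows "wsum V (insert i F) a = wsum V F a - wsum (V \<inter> {x. a i \<bullet> x = 0}) F a"
proof -
  let ?g = "\<lambda>V B. (-1::int)^(card B + dim (V \<inter> {x. \<forall>K\<in>B. a K \<bullet> x = 0}))"
  have P: "Pow (insert i F) = Pow F \<union> insert i ` Pow F" by (rule Pow_insert)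
  have disj: "Pow F \<inter> insert i ` Pow F = {}" using i by auto
  have inj: "inj_on (insert i) (Pow F)" using i unfolding inj_on_def
    by (metis PowD insert_ident subset_iff)
  have "wsum V (insert i F) a = sum (?g V) (Pow F) + sum (?g V) (insert i ` Pow F)"
    unfolding wsum_def P using F disj by (intro sum.union_disjoint) auto
  also have "sum (?g V) (insert i ` Pow F) = sum (?g V \<circ> insert i) (Pow F)"
    using inj by (rule sum.reindex)
  also have "\<dots> = sum (\<lambda>B. - ?g (V \<inter> {x. a i \<bullet> x = 0}) B) (Pow F)"
  proof (rule sum.cong[OF refl])
    fix B assume B: "B \<in> Pow F"
    then have fB: "finite B" using F finite_subset by auto
    have "i \<notin> B" using B i by auto
    then have cB: "card (insert i B) = card B + 1" using fB by simp
    have eq: "V \<inter> {x. \<forall>K\<in>insert i B. a K \<bullet> x = 0} = (V \<inter> {x. a i \<bullet> x = 0}) \<inter> {x. \<forall>K\<in>B. a K \<bullet> x = 0}"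
      by auto
    show "(?g V \<circ> insert i) B = - ?g (V \<inter> {x. a i \<bullet> x = 0}) B"
      unfolding comp_def cB eq by simp
  qed
  also have "\<dots> = - wsum (V \<inter> {x. a i \<bullet> x = 0}) F a"
    unfolding wsum_def by (simp add: sum_negf)
  finally show ?thesis unfolding wsum_def by simp
qed

lemma zas:
  fixes V :: "'a::euclidean_space set" and a :: "'i \<Rightarrow> 'a"
  assumes "finite F" "subspace V"
  shows "int (card (sv V F a)) = (-1)^(dim V) * wsum V F a"
  using assms
proof (induction F arbitrary: V rule: finite_induct)
  case empty
  have "sv V {} a = {sig a {} 0}"
    using empty subspace_0[OF empty(1)] by (auto simp: sv_def sig_def intro!: image_eqI[of _ _ 0])
  then show ?case by (simp add: wsum_def power_add[symmetric])
next
  case (insert i F)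
  let ?H = "V \<inter> {x. a i \<bullet> x = 0}"
  have sH: "subspace ?H" using insert.prems by (simp add: subspace_inter subspace_hyperplane)
  have ws: "wsum V (insert i F) a = wsum V F a - wsum ?H F a"
    using insert.hyps by (rule wsum_insert)
  show ?case
  proof (cases "\<exists>v\<in>V. a i \<bullet> v \<noteq> 0")
    case True
    then obtain v0 where v0: "v0 \<in> V" "a i \<bullet> v0 \<noteq> 0" by blast
    define v where "v = (if a i \<bullet> v0 > 0 then v0 else - v0)"
    have v: "v \<in> V" "a i \<bullet> v > 0" using v0 insert.prems
      by (auto simp: v_def subspace_neg)
    have d: "dim ?H + 1 = dim V" using dim_hyp_sub[OF insert.prems v(1)] v(2) by simp
    have c: "card (sv V (insert i F) a) = card (sv V F a) + card (sv ?H F a)"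
      using card_split[of V F i v a, OF insert.prems insert.hyps(1,2) v] .
    have sgn: "(-1::int)^(dim V) = - ((-1)^(dim ?H))" using d[symmetric] by simp
    show ?thesis unfolding ws c using insert.IH[OF insert.prems] insert.IH[OF sH] sgn
      by (simp add: algebra_simps)
  next
    case False
    then have "sv V (insert i F) a = {}" by (auto simp: sv_def)
    moreover have "?H = V" using False by auto
    ultimately show ?thesis unfolding ws by simp
  qed
qed


lemma card_quot:
  assumes "\<And>x y. x \<in> T \<Longrightarrow> y \<in> T \<Longrightarrow> (f x = f y) = (g x = g y)"
  shows "card (f ` T) = card (g ` T)"
proof -
  define h where "h = (\<lambda>s. f (SOME x. x \<in> T \<and> g x = s))"
  have hg: "h (g x) = f x" if "x \<in> T" for x
  proof -
    have ex: "\<exists>y. y \<in> T \<and> g y = g x" using that by blast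
    have "(SOME y. y \<in> T \<and> g y = g x) \<in> T \<and> g (SOME y. y \<in> T \<and> g y = g x) = g x"
      using someI_ex[OF ex] .
    then show ?thesis unfolding h_def using assms that by blast
  qed
  have img: "f ` T = h ` (g ` T)" using hg by (auto simp: image_image)
  have inj: "inj_on h (g ` T)"
    unfolding inj_on_def using hg assms by auto
  show ?thesis unfolding img by (rule card_image[OF inj])
qed

locale arr =
  fixes A :: "(real^4) set set" and a :: "(real^4) set \<Rightarrow> real^4"
  assumes arrA: "is_arrangement A"
    and aH: "\<And>H. H \<in> A \<Longrightarrow> a H \<noteq> 0 \<and> H = {x. a H \<bullet> x = 0}"
begin

definition S where "S = - \<Union>A"
definition cell where "cell x = {y\<in>S. sig a A y = sig a A x}"

lemma finA: "finite A" using arrA by (simp add: is_arrangement_def)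

lemma inS: "x \<in> S \<longleftrightarrow> (\<forall>K\<in>A. a K \<bullet> x \<noteq> 0)"
  unfolding S_def using aH by blast

lemma sig_eq: "sig a A y = sig a A x \<longleftrightarrow> (\<forall>K\<in>A. sgn (a K \<bullet> y) = sgn (a K \<bullet> x))"
proof
  assume eq: "sig a A y = sig a A x"
  show "\<forall>K\<in>A. sgn (a K \<bullet> y) = sgn (a K \<bullet> x)"
  proof
    fix K assume "K \<in> A"
    then show "sgn (a K \<bullet> y) = sgn (a K \<bullet> x)" using fun_cong[OF eq, of K] by (simp add: sig_def)
  qed
next
  assume "\<forall>K\<in>A. sgn (a K \<bullet> y) = sgn (a K \<bullet> x)"
  then show "sig a A y = sig a A x" unfolding sig_def by (intro restrict_ext) simp
qed

lemma sgn_pos_iff: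
  fixes c d :: real
  assumes "c \<noteq> 0" shows "(0 < sgn c * d) \<longleftrightarrow> (d \<noteq> 0 \<and> sgn d = sgn c)"
  using assms by (cases "c > 0"; cases "d > 0"; cases "d = 0") (auto simp: sgn_if)

lemma cell_alt:
  assumes x: "x \<in> S"
  shows "cell x = (\<Inter>K\<in>A. {y. (sgn (a K \<bullet> x) *\<^sub>R a K) \<bullet> y > 0})"
proof -
  have "y \<in> cell x \<longleftrightarrow> (\<forall>K\<in>A. (sgn (a K \<bullet> x) *\<^sub>R a K) \<bullet> y > 0)" for y
  proof -
    have "y \<in> cell x \<longleftrightarrow> (\<forall>K\<in>A. a K \<bullet> y \<noteq> 0 \<and> sgn (a K \<bullet> y) = sgn (a K \<bullet> x))"
      unfolding cell_def sig_eq inS by blast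
    also have "\<dots> \<longleftrightarrow> (\<forall>K\<in>A. (sgn (a K \<bullet> x) *\<^sub>R a K) \<bullet> y > 0)"
    proof -
      have "(a K \<bullet> y \<noteq> 0 \<and> sgn (a K \<bullet> y) = sgn (a K \<bullet> x)) \<longleftrightarrow> (sgn (a K \<bullet> x) *\<^sub>R a K) \<bullet> y > 0"
        if "K \<in> A" for K
      proof -
        have "a K \<bullet> x \<noteq> 0" using x that inS by blast
        then have e: "(0 < sgn (a K \<bullet> x) * (a K \<bullet> y)) = (a K \<bullet> y \<noteq> 0 \<and> sgn (a K \<bullet> y) = sgn (a K \<bullet> x))"
          by (rule sgn_pos_iff)
        show ?thesis unfolding inner_scaleR_left e ..
      qed
      then show ?thesis by blast
    qed
    finally show ?thesis .
  qed
  then show ?thesis by blast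
qed

lemma comp_cell:
  assumes x: "x \<in> S"
  shows "connected_component_set S x = cell x"
proof
  have "convex (cell x)" unfolding cell_alt[OF x] by (intro convex_INT convex_halfspace_gt)
  then have "connected (cell x)" by (rule convex_connected)
  moreover have "x \<in> cell x" "cell x \<subseteq> S" using x by (auto simp: cell_def)
  ultimately show "cell x \<subseteq> connected_component_set S x"
    by (intro connected_component_maximal) auto
  show "connected_component_set S x \<subseteq> cell x"
  proof
    fix y assume y: "y \<in> connected_component_set S x"
    let ?C = "connected_component_set S x"
    have CS: "?C \<subseteq> S" by (rule connected_component_subset)
    have xC: "x \<in> ?C" using x by (simp add: connected_component_refl)
    have yS: "y \<in> S" using y CS by auto
    have "sgn (a K \<bullet> y) = sgn (a K \<bullet> x)" if K: "K \<in> A" for K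
    proof (rule ccontr)
      assume ne: "sgn (a K \<bullet> y) \<noteq> sgn (a K \<bullet> x)"
      have nz: "a K \<bullet> y \<noteq> 0" "a K \<bullet> x \<noteq> 0" using x yS K inS by auto
      then have "(x \<bullet> a K \<le> 0 \<and> 0 \<le> y \<bullet> a K) \<or> (y \<bullet> a K \<le> 0 \<and> 0 \<le> x \<bullet> a K)"
        using ne by (auto simp: sgn_if inner_commute split: if_splits)
      then obtain z where "z \<in> ?C" "z \<bullet> a K = 0"
        using connected_ivt_component[of ?C x y "a K" 0] connected_ivt_component[of ?C y x "a K" 0] xC y
        by auto
      then show False using CS K inS by (auto simp: inner_commute)
    qed
    then show "y \<in> cell x" using yS by (simp add: cell_def sig_eq)
  qed
qed

lemma components_S: "components S = cell ` S"
  unfolding components_def using comp_cell by (intro image_cong) auto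

lemma sv_S: "sv UNIV A a = sig a A ` S"
  unfolding sv_def using inS by auto

lemma cell_eq: "x \<in> S \<Longrightarrow> y \<in> S \<Longrightarrow> cell x = cell y \<longleftrightarrow> sig a A x = sig a A y"
proof
  assume "x \<in> S" "cell x = cell y"
  moreover have "x \<in> cell x" using \<open>x \<in> S\<close> by (simp add: cell_def)
  ultimately show "sig a A x = sig a A y" by (simp add: cell_def)
qed (simp add: cell_def)

lemma neg_S: "x \<in> S \<Longrightarrow> - x \<in> S" using inS by simp

lemma sig_neg_eq: "sig a A (-x) = sig a A (-y) \<longleftrightarrow> sig a A x = sig a A y"
  unfolding sig_eq by (auto simp: sgn_minus)

lemma cell_neg: "x \<in> S \<Longrightarrow> uminus ` cell x = cell (- x)"
proof -
  assume x: "x \<in> S"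
  have "y \<in> uminus ` cell x \<longleftrightarrow> y \<in> cell (-x)" for y
  proof -
    have "y \<in> uminus ` cell x \<longleftrightarrow> -y \<in> cell x" by (auto intro: image_eqI[of _ _ "-y"])
    also have "\<dots> \<longleftrightarrow> y \<in> cell (-x)"
      unfolding cell_def using neg_S[of y] neg_S[of "-y"] sig_neg_eq[of "-y" x] by auto
    finally show ?thesis .
  qed
  then show ?thesis by blast
qed

lemma two_f3: "2 * f3 A = card (sv UNIV A a)"
proof -
  have "A \<noteq> {}"
  proof
    assume "A = {}"
    then have "\<Inter>A = (UNIV :: (real^4) set)" by simp
    moreover have "\<Inter>A = {0::real^4}" using arrA by (simp add: is_arrangement_def)
    ultimately have "(UNIV :: (real^4) set) = {0}" by simp
    moreover have "(axis 1 1 :: real^4) \<in> UNIV" by simp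
    ultimately show False by (metis axis_nth singletonD zero_index zero_neq_one)
  qed
  then obtain H0 where H0: "H0 \<in> A" by blast
  let ?T = "{x\<in>S. a H0 \<bullet> x > 0}"
  let ?T' = "{x\<in>S. a H0 \<bullet> x < 0}"
  have ST: "S = ?T \<union> ?T'" using H0 inS by (auto simp: linorder_neq_iff)
  have T': "?T' = uminus ` ?T"
  proof
    show "?T' \<subseteq> uminus ` ?T"
    proof
      fix x assume x: "x \<in> ?T'"
      then have "-x \<in> ?T" using neg_S by simp
      then show "x \<in> uminus ` ?T" by (rule rev_image_eqI) simp
    qed
    show "uminus ` ?T \<subseteq> ?T'" using neg_S by auto
  qed
  have finSig: "finite (sig a A ` S)" using finite_sv[OF finA, of UNIV a] sv_S by simp
  have sgT: "sig a A x H0 = 1" if "x \<in> ?T" for x using that H0 by (simp add: sig_def)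
  have sgT': "sig a A x H0 = -1" if "x \<in> ?T'" for x using that H0 by (simp add: sig_def)
  have c1: "card (sig a A ` S) = card (sig a A ` ?T) + card (sig a A ` ?T')"
  proof -
    have "sig a A ` S = sig a A ` ?T \<union> sig a A ` ?T'" using ST by auto
    moreover have "sig a A ` ?T \<inter> sig a A ` ?T' = {}"
    proof (rule ccontr)
      assume "sig a A ` ?T \<inter> sig a A ` ?T' \<noteq> {}"
      then obtain x y where "x \<in> ?T" "y \<in> ?T'" "sig a A x = sig a A y" by blast
      then show False using sgT sgT' by force
    qed
    ultimately show ?thesis using finSig by (simp add: card_Un_disjoint)
  qed
  have c2: "card (sig a A ` ?T') = card (sig a A ` ?T)"
  proof -
    have "sig a A ` ?T' = (\<lambda>x. sig a A (-x)) ` ?T" unfolding T' by (simp add: image_image)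
    also have "card \<dots> = card (sig a A ` ?T)" by (rule card_quot) (simp add: sig_neg_eq)
    finally show ?thesis .
  qed
  have ch: "chambers A = (\<lambda>x. cell x \<union> cell (-x)) ` ?T"
  proof -
    have "chambers A = (\<lambda>x. cell x \<union> uminus ` cell x) ` S"
      unfolding chambers_def S_def[symmetric] components_S by (simp add: image_image)
    also have "\<dots> = (\<lambda>x. cell x \<union> cell (-x)) ` S" using cell_neg by (intro image_cong) simp_all
    also have "\<dots> = (\<lambda>x. cell x \<union> cell (-x)) ` ?T"
    proof
      show "(\<lambda>x. cell x \<union> cell (-x)) ` S \<subseteq> (\<lambda>x. cell x \<union> cell (-x)) ` ?T"
      proof
        fix C assume "C \<in> (\<lambda>x. cell x \<union> cell (-x)) ` S"
        then obtain x where x: "x \<in> S" "C = cell x \<union> cell (-x)" by auto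
        show "C \<in> (\<lambda>x. cell x \<union> cell (-x)) ` ?T"
        proof (cases "x \<in> ?T")
          case True then show ?thesis by (rule rev_image_eqI) (simp add: x)
        next
          case False
          have "a H0 \<bullet> x \<noteq> 0" using x(1) H0 inS by blast
          then have "a H0 \<bullet> x < 0" using False x(1) by auto
          then have "-x \<in> ?T" using neg_S[OF x(1)] by simp
          moreover have "C = cell (-x) \<union> cell (- (-x))" using x(2) by (simp add: Un_commute)
          ultimately show ?thesis by (rule rev_image_eqI)
        qed
      qed
      show "(\<lambda>x. cell x \<union> cell (-x)) ` ?T \<subseteq> (\<lambda>x. cell x \<union> cell (-x)) ` S"
        by (rule image_mono) blast
    qed
    finally show ?thesis .
  qed
  have c3: "card (chambers A) = card (sig a A ` ?T)"
    unfolding ch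
  proof (rule card_quot)
    fix x y assume x: "x \<in> ?T" and y: "y \<in> ?T"
    show "(cell x \<union> cell (-x) = cell y \<union> cell (-y)) = (sig a A x = sig a A y)"
    proof
      assume eq: "cell x \<union> cell (-x) = cell y \<union> cell (-y)"
      have "x \<in> cell x" using x by (simp add: cell_def)
      then have "x \<in> cell y \<or> x \<in> cell (-y)" using eq by auto
      moreover have "x \<notin> cell (-y)"
      proof
        assume "x \<in> cell (-y)"
        then have "sig a A x H0 = sig a A (-y) H0" by (simp add: cell_def)
        moreover have "sig a A (-y) H0 = -1" using sgT'[of "-y"] y neg_S by auto
        ultimately show False using sgT[OF x] by simp
      qed
      ultimately show "sig a A x = sig a A y" unfolding cell_def by blast
    next
      assume "sig a A x = sig a A y"
      moreover then have "sig a A (-x) = sig a A (-y)" by (simp add: sig_neg_eq)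
      ultimately show "cell x \<union> cell (-x) = cell y \<union> cell (-y)" by (simp add: cell_def)
    qed
  qed
  show ?thesis unfolding f3_def sv_S using c1 c2 c3 by simp
qed

end


lemma alt_sum:
  assumes "finite E"
  shows "(\<Sum>B\<in>Pow E. (-1::int)^card B) = (if E = {} then 1 else 0)"
  using assms
proof (induction E rule: finite_induct)
  case empty then show ?case by simp
next
  case (insert i F)
  have P: "Pow (insert i F) = Pow F \<union> insert i ` Pow F" by (rule Pow_insert)
  have disj: "Pow F \<inter> insert i ` Pow F = {}" using insert.hyps by auto
  have inj: "inj_on (insert i) (Pow F)" using insert.hyps unfolding inj_on_def
    by (metis PowD insert_ident subset_iff)
  have "(\<Sum>B\<in>Pow (insert i F). (-1::int)^card B) = (\<Sum>B\<in>Pow F. (-1::int)^card B) + (\<Sum>B\<in>insert i ` Pow F. (-1::int)^card B)"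
    unfolding P using insert.hyps disj by (intro sum.union_disjoint) auto
  also have "(\<Sum>B\<in>insert i ` Pow F. (-1::int)^card B) = (\<Sum>B\<in>Pow F. (-1::int)^card (insert i B))"
    using sum.reindex[OF inj] by simp
  also have "\<dots> = (\<Sum>B\<in>Pow F. - ((-1::int)^card B))"
  proof (rule sum.cong[OF refl])
    fix B assume B: "B \<in> Pow F"
    then have "finite B" "i \<notin> B" using insert.hyps finite_subset by auto
    then show "(-1::int)^card (insert i B) = - ((-1)^card B)" by simp
  qed
  finally show ?case by (simp add: sum_negf)
qed

context arr
begin

lemma L_eq: "int_lattice A = Inter ` Pow A"
  unfolding int_lattice_def by auto

lemma finL: "finite (int_lattice A)"
  unfolding L_eq using finA by simp

lemma subspace_H: "H \<in> A \<Longrightarrow> subspace H"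
  using aH[of H] subspace_hyperplane[of "a H"] by simp

lemma subspace_Inter_B: "B \<subseteq> A \<Longrightarrow> subspace (\<Inter>B)"
  using subspace_H by (intro subspace_Inter) auto

lemma subspace_L: "X \<in> int_lattice A \<Longrightarrow> subspace X"
  unfolding L_eq using subspace_Inter_B by auto

lemma DIM4: "DIM(real^4) = 4" by simp

lemma dim_le4: "dim (X :: (real^4) set) \<le> 4"
  using dim_subset_UNIV[of X] by simp

lemma dim_H: "H \<in> A \<Longrightarrow> dim H = 3"
  using aH[of H] dim_hyperplane[of "a H"] by simp

lemma H_ne_UNIV: "H \<in> A \<Longrightarrow> H \<noteq> UNIV"
proof
  assume H: "H \<in> A" "H = UNIV"
  then have "a H \<in> H" by simp
  then have "a H \<bullet> a H = 0" using aH[OF H(1)] by blast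
  then show False using aH[OF H(1)] by simp
qed

lemma dim_HK: assumes "H \<in> A" "K \<in> A" "H \<noteq> K" shows "dim (H \<inter> K) \<le> 2"
proof -
  have sH: "subspace H" "subspace K" using assms subspace_H by auto
  have "\<not> H \<subseteq> K"
  proof
    assume "H \<subseteq> K"
    then have "H = K" using subspace_dim_equal[OF sH] dim_H assms by simp
    then show False using assms by simp
  qed
  then have ps: "H \<inter> K \<subset> H" by blast
  have "span (H \<inter> K) = H \<inter> K" by (metis sH subspace_inter span_eq_iff)
  moreover have "span H = H" by (metis sH span_eq_iff)
  ultimately have "span (H \<inter> K) \<subset> span H" using ps by metis
  then have "dim (H \<inter> K) < dim H" by (rule dim_psubset)
  then show ?thesis using dim_H assms by simp
qed

lemma dim_Inter_ge2:
  assumes B: "B \<subseteq> A" "2 \<le> card B"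
  shows "dim (\<Inter>B) \<le> 2"
proof -
  have fB: "finite B" using B finA finite_subset by auto
  have "B \<noteq> {}" using B by auto
  then obtain H where H: "H \<in> B" by blast
  have "B - {H} \<noteq> {}"
  proof
    assume "B - {H} = {}"
    then have "B \<subseteq> {H}" by blast
    then have "card B \<le> 1" using card_mono[of "{H}" B] by simp
    then show False using B by simp
  qed
  then obtain K where K: "K \<in> B" "K \<noteq> H" by blast
  have "\<Inter>B \<subseteq> H \<inter> K" using H K by blast
  then have "dim (\<Inter>B) \<le> dim (H \<inter> K)" by (rule dim_subset)
  also have "\<dots> \<le> 2" using dim_HK[of H K] H K B by auto
  finally show ?thesis .
qed

lemma dim_Inter_4: "B \<subseteq> A \<Longrightarrow> dim (\<Inter>B) = 4 \<longleftrightarrow> B = {}"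
proof
  assume B: "B \<subseteq> A" "dim (\<Inter>B) = 4"
  show "B = {}"
  proof (rule ccontr)
    assume "B \<noteq> {}"
    then obtain H where "H \<in> B" by blast
    then have "\<Inter>B \<subseteq> H" by blast
    then have "dim (\<Inter>B) \<le> dim H" by (rule dim_subset)
    then show False using dim_H \<open>H \<in> B\<close> B by fastforce
  qed
qed simp

lemma dim_Inter_3: "B \<subseteq> A \<Longrightarrow> dim (\<Inter>B) = 3 \<longleftrightarrow> card B = 1"
proof
  assume B: "B \<subseteq> A" "dim (\<Inter>B) = 3"
  have "B \<noteq> {}" using B by auto
  moreover have "\<not> 2 \<le> card B" using dim_Inter_ge2[of B] B by auto
  moreover have "finite B" using B finA finite_subset by auto
  ultimately have "card B \<noteq> 0" "\<not> 2 \<le> card B" by auto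
  then show "card B = 1" by linarith
next
  assume B: "B \<subseteq> A" "card B = 1"
  then obtain H where "B = {H}" by (auto simp: card_1_singleton_iff)
  then show "dim (\<Inter>B) = 3" using dim_H B by auto
qed


definition mw :: "(real^4) set \<Rightarrow> int" where
  "mw X = (\<Sum>B\<in>{B\<in>Pow A. \<Inter>B = X}. (-1::int)^card B)"

lemma AX_empty_iff:
  assumes X: "X \<in> int_lattice A"
  shows "{H\<in>A. X \<subseteq> H} = {} \<longleftrightarrow> X = UNIV"
proof
  assume e: "{H\<in>A. X \<subseteq> H} = {}"
  obtain B where B: "B \<subseteq> A" "X = \<Inter>B" using X unfolding L_eq by auto
  have "B = {}" using B e by blast
  then show "X = UNIV" using B by simp
next
  assume "X = UNIV"
  then show "{H\<in>A. X \<subseteq> H} = {}" using H_ne_UNIV by blast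
qed

lemma mw_up:
  assumes X: "X \<in> int_lattice A"
  shows "(\<Sum>Y\<in>{Y\<in>int_lattice A. X \<subseteq> Y}. mw Y) = (if X = UNIV then 1 else 0)"
proof -
  let ?S = "{B\<in>Pow A. X \<subseteq> \<Inter>B}"
  let ?T = "{Y\<in>int_lattice A. X \<subseteq> Y}"
  have fS: "finite ?S" using finA by simp
  have fT: "finite ?T" using finL by simp
  have im: "Inter ` ?S \<subseteq> ?T" unfolding L_eq by auto
  have "(\<Sum>Y\<in>?T. mw Y) = (\<Sum>Y\<in>?T. \<Sum>B\<in>{B\<in>?S. \<Inter>B = Y}. (-1::int)^card B)"
  proof (rule sum.cong[OF refl])
    fix Y assume "Y \<in> ?T"
    then have "{B\<in>?S. \<Inter>B = Y} = {B\<in>Pow A. \<Inter>B = Y}" by auto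
    then show "mw Y = (\<Sum>B\<in>{B\<in>?S. \<Inter>B = Y}. (-1::int)^card B)" by (simp add: mw_def)
  qed
  also have "\<dots> = (\<Sum>B\<in>?S. (-1::int)^card B)"
    using sum.group[OF fS fT im, of "\<lambda>B. (-1::int)^card B"] by simp
  also have "?S = Pow {H\<in>A. X \<subseteq> H}" by auto
  also have "(\<Sum>B\<in>Pow {H\<in>A. X \<subseteq> H}. (-1::int)^card B) = (if X = UNIV then 1 else 0)"
    using alt_sum[of "{H\<in>A. X \<subseteq> H}"] finA AX_empty_iff[OF X] by simp
  finally show ?thesis .
qed

lemma mw_rec:
  assumes X: "X \<in> int_lattice A"
  shows "mw X = (if X = UNIV then 1 else - (\<Sum>Y\<in>{Y\<in>int_lattice A. X \<subset> Y \<and> Y \<subseteq> UNIV}. mw Y))"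
proof -
  let ?U = "{Y\<in>int_lattice A. X \<subset> Y \<and> Y \<subseteq> UNIV}"
  have eq: "{Y\<in>int_lattice A. X \<subseteq> Y} = insert X ?U" using X by auto
  have fU: "finite ?U" using finL by simp
  have "mw X + (\<Sum>Y\<in>?U. mw Y) = (if X = UNIV then 1 else 0)"
    using mw_up[OF X] unfolding eq using fU by (simp add: sum.insert)
  moreover have "X = UNIV \<Longrightarrow> ?U = {}" by auto
  ultimately show ?thesis by (auto split: if_splits)
qed

lemma mw_out: "X \<notin> int_lattice A \<Longrightarrow> mw X = 0"
  unfolding mw_def L_eq by (auto intro!: sum.neutral)

lemma mob_unique:
  assumes m: "\<forall>X\<in>int_lattice A. m X = (if X = UNIV then 1
                       else - (\<Sum>Y\<in>{Y\<in>int_lattice A. X \<subset> Y \<and> Y \<subseteq> UNIV}. m Y))"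
  shows "X \<in> int_lattice A \<Longrightarrow> m X = mw X"
proof (induction X rule: measure_induct_rule[where f = "\<lambda>X. card {Y\<in>int_lattice A. X \<subset> Y}"])
  case (less X)
  have IH: "m Y = mw Y" if "Y \<in> {Y\<in>int_lattice A. X \<subset> Y \<and> Y \<subseteq> UNIV}" for Y
  proof (rule less.IH)
    have "{Z\<in>int_lattice A. Y \<subset> Z} \<subset> {Z\<in>int_lattice A. X \<subset> Z}" using that by auto
    then show "card {Z\<in>int_lattice A. Y \<subset> Z} < card {Z\<in>int_lattice A. X \<subset> Z}"
      using finL by (intro psubset_card_mono) auto
    show "Y \<in> int_lattice A" using that by auto
  qed
  have s: "sum m {Y\<in>int_lattice A. X \<subset> Y \<and> Y \<subseteq> UNIV} = sum mw {Y\<in>int_lattice A. X \<subset> Y \<and> Y \<subseteq> UNIV}"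
    by (rule sum.cong[OF refl]) (rule IH)
  have "m X = (if X = UNIV then 1 else - sum m {Y\<in>int_lattice A. X \<subset> Y \<and> Y \<subseteq> UNIV})"
    using m less.prems by blast
  then show ?case unfolding s mw_rec[OF less.prems] .
qed

lemma mob_eq: "mobius_from (int_lattice A) UNIV = mw"
  unfolding mobius_from_def
proof (rule the_equality)
  show "(\<forall>X. X \<notin> int_lattice A \<longrightarrow> mw X = 0) \<and>
    (\<forall>X\<in>int_lattice A. mw X = (if X = UNIV then 1
        else - (\<Sum>Y\<in>{Y\<in>int_lattice A. X \<subset> Y \<and> Y \<subseteq> UNIV}. mw Y)))"
    using mw_out mw_rec by blast
next
  fix m :: "(real^4) set \<Rightarrow> int" assume m: "(\<forall>X. X \<notin> int_lattice A \<longrightarrow> m X = 0) \<and>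
    (\<forall>X\<in>int_lattice A. m X = (if X = UNIV then 1
        else - (\<Sum>Y\<in>{Y\<in>int_lattice A. X \<subset> Y \<and> Y \<subseteq> UNIV}. m Y)))"
  show "m = mw"
  proof
    fix X show "m X = mw X"
      using m mob_unique[of m X] mw_out[of X] by (cases "X \<in> int_lattice A") auto
  qed
qed

lemma whitney: "char_poly A = (\<Sum>B\<in>Pow A. monom (of_int ((-1)^card B)) (dim (\<Inter>B)))"
proof -
  have "char_poly A = (\<Sum>X\<in>int_lattice A. \<Sum>B\<in>{B\<in>Pow A. \<Inter>B = X}. monom (of_int ((-1)^card B)) (dim (\<Inter>B)))"
    unfolding char_poly_def mob_eq
  proof (rule sum.cong[OF refl])
    fix X
    have "monom (of_int (mw X)) (dim X) = (\<Sum>B\<in>{B\<in>Pow A. \<Inter>B = X}. monom (of_int ((-1)^card B)) (dim X))"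
      unfolding mw_def by (simp add: monom_sum)
    also have "\<dots> = (\<Sum>B\<in>{B\<in>Pow A. \<Inter>B = X}. monom (of_int ((-1)^card B)) (dim (\<Inter>B)))"
      by (rule sum.cong) auto
    finally show "monom (of_int (mw X)) (dim X) = \<dots>" .
  qed
  also have "\<dots> = (\<Sum>B\<in>Pow A. monom (of_int ((-1)^card B)) (dim (\<Inter>B)))"
    using finA finL by (intro sum.group) (auto simp: L_eq)
  finally show ?thesis .
qed

end


lemma pcons_test:
  fixes c0 c1 c2 :: real
  shows "[:-1, 1:] * [:c0, c1, c2, 1:] = [:- c0, c0 - c1, c1 - c2, c2 - 1, 1:]"
  by (simp add: algebra_simps)

context arr
begin

lemma A_ne: "A \<noteq> {}"
proof
  assume "A = {}"
  then have "\<Inter>A = (UNIV :: (real^4) set)" by simp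
  moreover have "\<Inter>A = {0::real^4}" using arrA by (simp add: is_arrangement_def)
  ultimately have "(UNIV :: (real^4) set) = {0}" by simp
  moreover have "(axis 1 1 :: real^4) \<in> UNIV" by simp
  ultimately show False by (metis axis_nth singletonD zero_index zero_neq_one)
qed

definition W :: "nat \<Rightarrow> int" where
  "W k = (\<Sum>B\<in>Pow A. if dim (\<Inter>B) = k then (-1::int)^card B else 0)"

lemma coeff_cp: "coeff (char_poly A) k = of_int (W k)"
  unfolding whitney W_def coeff_sum coeff_monom of_int_sum
  by (rule sum.cong) auto

lemma poly_cp: "poly (char_poly A) x = (\<Sum>B\<in>Pow A. of_int ((-1)^card B) * x ^ dim (\<Inter>B))"
  unfolding whitney poly_sum poly_monom ..

lemma cp_1: "poly (char_poly A) 1 = 0"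
proof -
  have "poly (char_poly A) 1 = of_int (\<Sum>B\<in>Pow A. (-1::int)^card B)"
    unfolding poly_cp by simp
  also have "\<dots> = 0" using alt_sum[OF finA] A_ne by simp
  finally show ?thesis .
qed

lemma cp_m1: "poly (char_poly A) (-1) = 2 * real (f3 A)"
proof -
  have eqI: "{x. \<forall>K\<in>B. a K \<bullet> x = 0} = \<Inter>B" if "B \<in> Pow A" for B
    using that aH by auto
  have "poly (char_poly A) (-1) = of_int (\<Sum>B\<in>Pow A. (-1::int)^(card B + dim (\<Inter>B)))"
    unfolding poly_cp by (simp add: power_add)
  also have "(\<Sum>B\<in>Pow A. (-1::int)^(card B + dim (\<Inter>B))) = wsum UNIV A a"
    unfolding wsum_def by (rule sum.cong[OF refl]) (simp add: eqI)
  also have "\<dots> = int (card (sv UNIV A a))"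
    using zas[OF finA subspace_UNIV, of a] by simp
  also have "\<dots> = int (2 * f3 A)" using two_f3 by simp
  finally show ?thesis by simp
qed

lemma W_big: "k > 4 \<Longrightarrow> W k = 0"
proof -
  assume k: "k > 4"
  have "dim (\<Inter>B) \<noteq> k" for B :: "(real^4) set set" using dim_le4[of "\<Inter>B"] k by linarith
  then show ?thesis unfolding W_def by (intro sum.neutral) auto
qed

lemma W4: "W 4 = 1"
proof -
  have "W 4 = (\<Sum>B\<in>Pow A. if B = {} then (-1::int)^card B else 0)"
    unfolding W_def by (rule sum.cong[OF refl]) (simp add: dim_Inter_4)
  also have "\<dots> = 1" by (simp add: sum.delta[OF finite_Pow_iff[THEN iffD2, OF finA]])
  finally show ?thesis .
qed

lemma W3: "W 3 = - int (card A)"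
proof -
  have "W 3 = (\<Sum>B\<in>Pow A. if card B = 1 then (-1::int) else 0)"
    unfolding W_def by (rule sum.cong[OF refl]) (auto simp: dim_Inter_3)
  also have "\<dots> = (\<Sum>B\<in>{B\<in>Pow A. card B = 1}. (-1::int))"
    by (rule sum.inter_filter[symmetric]) (simp add: finA)
  also have "{B\<in>Pow A. card B = 1} = (\<lambda>H. {H}) ` A" by (auto simp: card_1_singleton_iff)
  also have "(\<Sum>B\<in>(\<lambda>H. {H}) ` A. (-1::int)) = - int (card A)"
    by (simp add: card_image inj_on_def)
  finally show ?thesis .
qed

lemma cp_explicit: "char_poly A = [:of_int (W 0), of_int (W 1), of_int (W 2), of_int (W 3), of_int (W 4):]"
proof (rule poly_eqI)
  fix k
  show "coeff (char_poly A) k = coeff [:of_int (W 0), of_int (W 1), of_int (W 2), of_int (W 3), of_int (W 4):] k"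
  proof (cases "k < 5")
    case True
    then have "k = 0 \<or> k = 1 \<or> k = 2 \<or> k = 3 \<or> k = 4" by linarith
    then show ?thesis by (elim disjE) (simp_all add: coeff_cp numeral_eq_Suc)
  next
    case False
    then obtain j where j: "k = Suc (Suc (Suc (Suc (Suc j))))" by (metis add_Suc less_natE not_less_eq numeral_eq_Suc pred_numeral_simps(3) pred_numeral_simps(2) semiring_norm(26) semiring_norm(27) add_0 Suc_eq_plus1 add.commute le_add_diff_inverse not_less)
    then show ?thesis using W_big[of k] by (simp add: coeff_cp)
  qed
qed

lemma psub_dim:
  fixes X Y :: "(real^4) set"
  assumes "subspace X" "subspace Y" "X \<subset> Y" shows "dim X < dim Y"
proof -
  have "span X \<subset> span Y" by (metis assms span_eq_iff)
  then show ?thesis by (rule dim_psubset)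
qed

lemma L_dim4: "Y \<in> int_lattice A \<Longrightarrow> dim Y = 4 \<Longrightarrow> Y = UNIV"
  unfolding L_eq using dim_Inter_4 by auto

lemma L_dim3: "Y \<in> int_lattice A \<Longrightarrow> dim Y = 3 \<Longrightarrow> Y \<in> A"
  unfolding L_eq using dim_Inter_3 by (auto simp: card_1_singleton_iff)

lemma UNIV_L: "UNIV \<in> int_lattice A" unfolding L_eq by (auto intro!: image_eqI[of _ _ "{}"])

lemma H_L: "H \<in> A \<Longrightarrow> H \<in> int_lattice A" unfolding L_eq by (auto intro!: image_eqI[of _ _ "{H}"])

lemma mw_UNIV: "mw UNIV = 1" using mw_rec[OF UNIV_L] by simp

lemma mw_H: assumes H: "H \<in> A" shows "mw H = -1"
proof -
  have "{Y\<in>int_lattice A. H \<subset> Y \<and> Y \<subseteq> UNIV} = {UNIV}"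
  proof
    show "{Y\<in>int_lattice A. H \<subset> Y \<and> Y \<subseteq> UNIV} \<subseteq> {UNIV}"
    proof
      fix Y assume Y: "Y \<in> {Y\<in>int_lattice A. H \<subset> Y \<and> Y \<subseteq> UNIV}"
      then have "dim H < dim Y" using psub_dim[of H Y] subspace_H[OF H] subspace_L by auto
      then have "dim Y = 4" using dim_H[OF H] dim_le4[of Y] by linarith
      then show "Y \<in> {UNIV}" using L_dim4 Y by auto
    qed
    show "{UNIV} \<subseteq> {Y\<in>int_lattice A. H \<subset> Y \<and> Y \<subseteq> UNIV}"
      using UNIV_L H_ne_UNIV[OF H] by auto
  qed
  then show ?thesis using mw_rec[OF H_L[OF H]] H_ne_UNIV[OF H] mw_UNIV by simp
qed

lemma mw_line:
  assumes X: "X \<in> lines A"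
  shows "mw X = int (weight A X) - 1"
proof -
  have XL: "X \<in> int_lattice A" and d2: "dim X = 2" using X by (auto simp: lines_def)
  have XU: "X \<noteq> UNIV" using d2 by auto
  have U: "{Y\<in>int_lattice A. X \<subset> Y \<and> Y \<subseteq> UNIV} = insert UNIV {H\<in>A. X \<subseteq> H}"
  proof
    show "{Y\<in>int_lattice A. X \<subset> Y \<and> Y \<subseteq> UNIV} \<subseteq> insert UNIV {H\<in>A. X \<subseteq> H}"
    proof
      fix Y assume Y: "Y \<in> {Y\<in>int_lattice A. X \<subset> Y \<and> Y \<subseteq> UNIV}"
      then have "dim X < dim Y" using psub_dim[of X Y] subspace_L XL by auto
      then have "dim Y = 3 \<or> dim Y = 4" using d2 dim_le4[of Y] by linarith
      then show "Y \<in> insert UNIV {H\<in>A. X \<subseteq> H}" using L_dim4 L_dim3 Y by auto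
    qed
    show "insert UNIV {H\<in>A. X \<subseteq> H} \<subseteq> {Y\<in>int_lattice A. X \<subset> Y \<and> Y \<subseteq> UNIV}"
    proof
      fix Y assume Y: "Y \<in> insert UNIV {H\<in>A. X \<subseteq> H}"
      show "Y \<in> {Y\<in>int_lattice A. X \<subset> Y \<and> Y \<subseteq> UNIV}"
      proof (cases "Y = UNIV")
        case True then show ?thesis using UNIV_L XU by auto
      next
        case False
        then have "Y \<in> A" "X \<subseteq> Y" using Y by auto
        moreover have "X \<noteq> Y" using d2 dim_H[OF \<open>Y \<in> A\<close>] by auto
        ultimately show ?thesis using H_L by auto
      qed
    qed
  qed
  have nU: "UNIV \<notin> {H\<in>A. X \<subseteq> H}" using H_ne_UNIV by auto
  have fAX: "finite {H\<in>A. X \<subseteq> H}" using finA by simp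
  have "(\<Sum>Y\<in>{Y\<in>int_lattice A. X \<subset> Y \<and> Y \<subseteq> UNIV}. mw Y) = 1 + (\<Sum>H\<in>{H\<in>A. X \<subseteq> H}. mw H)"
    unfolding U using nU fAX mw_UNIV by (simp add: sum.insert)
  also have "(\<Sum>H\<in>{H\<in>A. X \<subseteq> H}. mw H) = (\<Sum>H\<in>{H\<in>A. X \<subseteq> H}. -1)"
    using mw_H by (intro sum.cong) auto
  also have "\<dots> = - int (weight A X)" by (simp add: weight_def)
  finally show ?thesis using mw_rec[OF XL] XU by simp
qed

lemma finLines: "finite (lines A)" using finL by (simp add: lines_def)

lemma W2_lines: "W 2 = (\<Sum>X\<in>lines A. mw X)"
proof -
  have "W 2 = (\<Sum>B\<in>{B\<in>Pow A. dim (\<Inter>B) = 2}. (-1::int)^card B)"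
    unfolding W_def by (rule sum.inter_filter[symmetric]) (simp add: finA)
  also have "\<dots> = (\<Sum>X\<in>lines A. \<Sum>B\<in>{B\<in>{B\<in>Pow A. dim (\<Inter>B) = 2}. \<Inter>B = X}. (-1::int)^card B)"
    using finA finLines by (intro sum.group[symmetric]) (auto simp: lines_def L_eq)
  also have "\<dots> = (\<Sum>X\<in>lines A. mw X)"
  proof (rule sum.cong[OF refl])
    fix X assume "X \<in> lines A"
    then have "{B\<in>{B\<in>Pow A. dim (\<Inter>B) = 2}. \<Inter>B = X} = {B\<in>Pow A. \<Inter>B = X}"
      by (auto simp: lines_def)
    then show "(\<Sum>B\<in>{B\<in>{B\<in>Pow A. dim (\<Inter>B) = 2}. \<Inter>B = X}. (-1::int)^card B) = mw X"
      by (simp add: mw_def)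
  qed
  finally show ?thesis .
qed

lemma weight_range:
  assumes X: "X \<in> lines A"
  shows "2 \<le> weight A X" "weight A X \<le> card A"
proof -
  obtain B where B: "B \<subseteq> A" "X = \<Inter>B" and d2: "dim X = 2"
    using X unfolding lines_def L_eq by auto
  have "B \<noteq> {}" using dim_Inter_4[OF B(1)] B d2 by auto
  moreover have "card B \<noteq> 1" using dim_Inter_3[OF B(1)] B d2 by auto
  moreover have fB: "finite B" using B finA finite_subset by auto
  ultimately have "2 \<le> card B" by (metis One_nat_def card_0_eq less_2_cases not_less)
  moreover have "B \<subseteq> {H\<in>A. X \<subseteq> H}" using B by auto
  then have "card B \<le> weight A X" unfolding weight_def using finA by (intro card_mono) auto
  ultimately show "2 \<le> weight A X" by linarith
  show "weight A X \<le> card A" unfolding weight_def using finA by (intro card_mono) auto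
qed

lemma W2_h: "W 2 = int (\<Sum>i\<in>{2..card A}. (i - 1) * h_count A i)"
proof -
  have "W 2 = (\<Sum>X\<in>lines A. int (weight A X) - 1)"
    unfolding W2_lines using mw_line by (intro sum.cong) auto
  also have "\<dots> = (\<Sum>i\<in>{2..card A}. \<Sum>X\<in>{X\<in>lines A. weight A X = i}. int (weight A X) - 1)"
    using finLines weight_range by (intro sum.group[symmetric]) auto
  also have "\<dots> = (\<Sum>i\<in>{2..card A}. int ((i - 1) * h_count A i))"
  proof (rule sum.cong[OF refl])
    fix i :: nat assume i: "i \<in> {2..card A}"
    have "(\<Sum>X\<in>{X\<in>lines A. weight A X = i}. int (weight A X) - 1) = (\<Sum>X\<in>{X\<in>lines A. weight A X = i}. int i - 1)"
      by (rule sum.cong) auto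
    also have "\<dots> = int (h_count A i) * (int i - 1)" by (simp add: h_count_def)
    also have "\<dots> = int ((i - 1) * h_count A i)" using i by (simp add: of_nat_diff)
    finally show "(\<Sum>X\<in>{X\<in>lines A. weight A X = i}. int (weight A X) - 1) = int ((i - 1) * h_count A i)" .
  qed
  also have "\<dots> = int (\<Sum>i\<in>{2..card A}. (i - 1) * h_count A i)" by simp
  finally show ?thesis .
qed

lemma g1_lines: "(\<Sum>i\<in>{2..card A}. h_count A i) = card (lines A)"
proof -
  have "(\<Sum>i\<in>{2..card A}. h_count A i) = (\<Sum>i\<in>{2..card A}. \<Sum>X\<in>{X\<in>lines A. weight A X = i}. (1::nat))"
    by (simp add: h_count_def)
  also have "\<dots> = (\<Sum>X\<in>lines A. (1::nat))"
    using finLines weight_range by (intro sum.group) auto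
  finally show ?thesis by simp
qed

lemma restr_sum: "(\<Sum>H\<in>A. restr_card A H) = (\<Sum>X\<in>lines A. weight A X)"
proof -
  have "(\<Sum>H\<in>A. restr_card A H) = (\<Sum>H\<in>A. \<Sum>X\<in>lines A. if X \<subseteq> H then (1::nat) else 0)"
    unfolding restr_card_def using finLines by (simp add: sum.If_cases Int_def)
  also have "\<dots> = (\<Sum>X\<in>lines A. \<Sum>H\<in>A. if X \<subseteq> H then (1::nat) else 0)"
    by (rule sum.swap)
  also have "\<dots> = (\<Sum>X\<in>lines A. weight A X)"
    unfolding weight_def using finA by (simp add: sum.If_cases Int_def)
  finally show ?thesis .
qed

end


lemma cubic_pos_big:
  fixes b c d M :: real
  assumes M: "M \<ge> 1 + \<bar>b\<bar> + \<bar>c\<bar> + \<bar>d\<bar>"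
  shows "M^3 + b * M^2 + c * M + d > 0"
proof -
  have M1: "M \<ge> 1" using M by simp
  have h1: "M + b \<ge> 1 + \<bar>c\<bar> + \<bar>d\<bar>" using M abs_ge_minus_self[of b] by linarith
  have h0: "M * (M + b) \<ge> 0" using M1 h1 by simp
  have h2: "(M - 1) * (M * (M + b)) \<ge> 0" using M1 h0 by simp
  have h3: "M * (M + b) \<ge> M * (1 + \<bar>c\<bar> + \<bar>d\<bar>)" using h1 M1 by (intro mult_left_mono) auto
  have h4: "M * (\<bar>c\<bar> + c) \<ge> 0" using M1 by simp
  have h5: "M * \<bar>d\<bar> \<ge> \<bar>d\<bar>" using mult_right_mono[OF M1 abs_ge_zero[of d]] by simp
  have e1: "M^3 + b * M^2 = (M - 1) * (M * (M + b)) + M * (M + b)"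
    by (simp add: algebra_simps power2_eq_square power3_eq_cube)
  have e2: "M * (1 + \<bar>c\<bar> + \<bar>d\<bar>) = M + M * \<bar>c\<bar> + M * \<bar>d\<bar>" by (simp add: algebra_simps)
  have e3: "M * (\<bar>c\<bar> + c) = M * \<bar>c\<bar> + c * M" by (simp add: algebra_simps)
  have "\<bar>d\<bar> + d \<ge> 0" by simp
  then show ?thesis using h2 h3 h4 h5 e1 e2 e3 M1 by linarith
qed

lemma cubic_real_root:
  fixes b c d :: real
  shows "\<exists>r. r^3 + b * r^2 + c * r + d = 0"
proof -
  define M where "M = 1 + \<bar>b\<bar> + \<bar>c\<bar> + \<bar>d\<bar>"
  let ?p = "[:d, c, b, 1:]"
  have pe: "poly ?p x = x^3 + b * x^2 + c * x + d" for x
    by (simp add: algebra_simps power2_eq_square power3_eq_cube)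
  have "poly ?p M > 0" using cubic_pos_big[of b c d M] unfolding pe M_def by auto
  moreover have "poly ?p (-M) < 0"
  proof -
    have "M^3 + (-b) * M^2 + c * M + (-d) > 0" using cubic_pos_big[of "-b" c "-d" M] unfolding M_def by auto
    moreover have "poly ?p (-M) = - (M^3 + (-b) * M^2 + c * M + (-d))"
      unfolding pe by (simp add: power2_eq_square power3_eq_cube)
    ultimately show ?thesis by simp
  qed
  moreover have "-M < M" unfolding M_def by simp
  ultimately obtain r where "poly ?p r = 0" using poly_IVT_pos[of "-M" M ?p] by auto
  then show ?thesis unfolding pe by blast
qed

lemma quad_factor:
  fixes z :: complex and r1 r2 be ga :: real
  assumes "r1 + r2 = - be" "r1 * r2 = ga"
  shows "(z - of_real r1) * (z - of_real r2) = z^2 + of_real be * z + of_real ga"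
proof -
  have e1: "(of_real be :: complex) = - of_real r1 - of_real r2"
  proof -
    have "be = - r1 - r2" using assms(1) by linarith
    then show ?thesis by simp
  qed
  have e2: "(of_real ga :: complex) = of_real r1 * of_real r2" by (subst assms(2)[symmetric]) simp
  show ?thesis unfolding e1 e2 by (simp add: algebra_simps power2_eq_square)
qed

lemma cubic_crit:
  fixes b c d :: real
  shows "(\<forall>z::complex. z^3 + of_real b * z^2 + of_real c * z + of_real d = 0 \<longrightarrow> z \<in> \<real>)
     \<longleftrightarrow> 0 \<le> b^2*c^2 - 4*c^3 - 4*b^3*d - 27*d^2 + 18*b*c*d"
proof -
  obtain r where r: "r^3 + b * r^2 + c * r + d = 0" using cubic_real_root by blast
  have d1: "d = -(r^3) - b * r^2 - c * r" using r by linarith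
  obtain be ga where bd: "b = be - r" "c = ga - r * be" "d = - r * ga"
  proof
    show "b = (b + r) - r" by simp
    show "c = (c + r * (b + r)) - r * (b + r)" by simp
    show "d = - r * (c + r * (b + r))" unfolding d1 by (simp add: algebra_simps power2_eq_square power3_eq_cube)
  qed
  define q where "q = r^2 + be * r + ga"
  define D2 where "D2 = be^2 - 4 * ga"
  have fac: "z^3 + of_real b * z^2 + of_real c * z + of_real d = (z - of_real r) * (z^2 + of_real be * z + of_real ga)" for z :: complex
    unfolding bd by (simp add: algebra_simps power2_eq_square power3_eq_cube)
  have Del: "b^2*c^2 - 4*c^3 - 4*b^3*d - 27*d^2 + 18*b*c*d = q^2 * D2"
    unfolding bd q_def D2_def by (simp add: algebra_simps power2_eq_square power3_eq_cube)
  have key: "0 \<le> q^2 * D2 \<longleftrightarrow> 0 \<le> D2"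
  proof
    assume h: "0 \<le> q^2 * D2"
    show "0 \<le> D2"
    proof (cases "q = 0")
      case True
      have "(2 * r + be)^2 = 4 * q + D2" unfolding q_def D2_def by (simp add: algebra_simps power2_eq_square)
      then show ?thesis using True by (metis add_0 mult_zero_right zero_le_power2)
    next
      case False
      then have "q^2 > 0" by simp
      then show ?thesis using h by (simp add: zero_le_mult_iff)
    qed
  qed simp
  have roots: "(\<forall>z::complex. z^3 + of_real b * z^2 + of_real c * z + of_real d = 0 \<longrightarrow> z \<in> \<real>) \<longleftrightarrow> 0 \<le> D2"
  proof
    assume all: "\<forall>z::complex. z^3 + of_real b * z^2 + of_real c * z + of_real d = 0 \<longrightarrow> z \<in> \<real>"
    show "0 \<le> D2"
    proof (rule ccontr)
      assume "\<not> 0 \<le> D2"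
      then have neg: "D2 < 0" by simp
      define s where "s = sqrt (- D2)"
      have s: "s > 0" "s * s = - D2" using neg by (auto simp: s_def)
      define z0 where "z0 = Complex (- be / 2) (s / 2)"
      have "z0^2 + of_real be * z0 + of_real ga = 0"
        using s(2) unfolding z0_def D2_def by (simp add: complex_eq_iff power2_eq_square field_simps)
      then have "z0^3 + of_real b * z0^2 + of_real c * z0 + of_real d = 0" unfolding fac by simp
      then have "z0 \<in> \<real>" using all by blast
      then show False using s(1) by (simp add: z0_def complex_is_Real_iff)
    qed
  next
    assume D: "0 \<le> D2"
    show "\<forall>z::complex. z^3 + of_real b * z^2 + of_real c * z + of_real d = 0 \<longrightarrow> z \<in> \<real>"
    proof (intro allI impI)
      fix z :: complex assume z: "z^3 + of_real b * z^2 + of_real c * z + of_real d = 0"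
      define s where "s = sqrt D2"
      have ss: "s * s = D2" using D by (simp add: s_def)
      have qf: "z^2 + of_real be * z + of_real ga = (z - of_real ((- be + s) / 2)) * (z - of_real ((- be - s) / 2))"
      proof (rule quad_factor[symmetric])
        show "(- be + s) / 2 + (- be - s) / 2 = - be" by (simp add: field_simps)
        show "(- be + s) / 2 * ((- be - s) / 2) = ga" using ss unfolding D2_def
          by (simp add: field_simps power2_eq_square)
      qed
      have "(z - of_real r) * ((z - of_real ((- be + s) / 2)) * (z - of_real ((- be - s) / 2))) = 0"
        using z unfolding fac qf .
      then have "z = of_real r \<or> z = of_real ((- be + s) / 2) \<or> z = of_real ((- be - s) / 2)" by auto
      then show "z \<in> \<real>" by (elim disjE; simp only: Reals_of_real)
    qed
  qed
  show ?thesis unfolding roots Del key ..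
qed

lemma sqrt_cond:
  fixes D u :: real
  shows "u^2 \<le> 4 * D^3 \<longleftrightarrow> (0 \<le> D \<and> u \<le> 2 * sqrt (D^3) \<and> - (2 * sqrt (D^3)) \<le> u)"
proof
  assume h: "u^2 \<le> 4 * D^3"
  have D3: "0 \<le> D^3" using h zero_le_power2[of u] by linarith
  have D0: "0 \<le> D"
  proof (rule ccontr)
    assume "\<not> 0 \<le> D"
    then have "D < 0" by simp
    then have "D * D > 0" by (simp add: mult_neg_neg)
    then have "D * (D * D) < 0" using \<open>D < 0\<close> by (simp add: mult_neg_pos)
    then show False using D3 by (simp add: power3_eq_cube)
  qed
  have "\<bar>u\<bar> = sqrt (u^2)" by simp
  also have "\<dots> \<le> sqrt (4 * D^3)" using h by (rule real_sqrt_le_mono)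
  also have "\<dots> = 2 * sqrt (D^3)" by (simp add: real_sqrt_mult)
  finally show "0 \<le> D \<and> u \<le> 2 * sqrt (D^3) \<and> - (2 * sqrt (D^3)) \<le> u" using D0 by linarith
next
  assume h: "0 \<le> D \<and> u \<le> 2 * sqrt (D^3) \<and> - (2 * sqrt (D^3)) \<le> u"
  then have D3: "0 \<le> D^3" by simp
  have "\<bar>u\<bar> \<le> 2 * sqrt (D^3)" using h by linarith
  then have "\<bar>u\<bar>^2 \<le> (2 * sqrt (D^3))^2" by (rule power_mono) simp
  also have "\<dots> = 4 * D^3" using D3 by (simp add: power_mult_distrib)
  finally show "u^2 \<le> 4 * D^3" by simp
qed

lemma disc_identity:
  fixes n h f :: real
  shows "27 * ((1 - n)^2 * (h + 1 - n)^2 - 4 * (h + 1 - n)^3 - 4 * (1 - n)^3 * (h + 1 - f)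
            - 27 * (h + 1 - f)^2 + 18 * (1 - n) * (h + 1 - n) * (h + 1 - f))
       = 4 * (n^2 + n - 2 - 3 * h)^3 - ((9 * n + 18) * h + 20 + 12 * n - 2 * n^3 - 3 * n^2 - 27 * f)^2"
  by (simp add: algebra_simps power2_eq_square power3_eq_cube)

lemma aux27: "27 * (P::real) = Q - R \<Longrightarrow> (0 \<le> P) = (R \<le> Q)" by linarith

lemma ii_arith:
  fixes n h f :: nat
  shows "0 \<le> (1 - real n)^2 * (real h + 1 - real n)^2 - 4 * (real h + 1 - real n)^3
            - 4 * (1 - real n)^3 * (real h + 1 - real f)
            - 27 * (real h + 1 - real f)^2 + 18 * (1 - real n) * (real h + 1 - real n) * (real h + 1 - real f)
    \<longleftrightarrow> (int h \<le> \<lfloor>(real n + 2) * (real n - 1) / 3\<rfloor>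
       \<and> int f \<le> \<lfloor>((9 * real n + 18) * real h + 20 + 12 * real n
              + 2 * sqrt ((real n ^ 2 + real n - 2 - 3 * real h) ^ 3)
              - 2 * real n ^ 3 - 3 * real n ^ 2) / 27\<rfloor>
       \<and> int f \<ge> \<lceil>((9 * real n + 18) * real h + 20 + 12 * real n
              - 2 * sqrt ((real n ^ 2 + real n - 2 - 3 * real h) ^ 3)
              - 2 * real n ^ 3 - 3 * real n ^ 2) / 27\<rceil>)"
proof -
  define D where "D = real n ^ 2 + real n - 2 - 3 * real h"
  define Y where "Y = (9 * real n + 18) * real h + 20 + 12 * real n - 2 * real n ^ 3 - 3 * real n ^ 2"
  define S where "S = sqrt (D ^ 3)"
  have l: "(0 \<le> (1 - real n)^2 * (real h + 1 - real n)^2 - 4 * (real h + 1 - real n)^3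
            - 4 * (1 - real n)^3 * (real h + 1 - real f)
            - 27 * (real h + 1 - real f)^2 + 18 * (1 - real n) * (real h + 1 - real n) * (real h + 1 - real f))
        \<longleftrightarrow> (Y - 27 * real f)^2 \<le> 4 * D^3"
    unfolding D_def Y_def by (rule aux27[OF disc_identity])
  have r1: "int h \<le> \<lfloor>(real n + 2) * (real n - 1) / 3\<rfloor> \<longleftrightarrow> 0 \<le> D"
    unfolding le_floor_iff D_def by (simp add: field_simps power2_eq_square)
  have r2: "int f \<le> \<lfloor>((9 * real n + 18) * real h + 20 + 12 * real n
              + 2 * sqrt ((real n ^ 2 + real n - 2 - 3 * real h) ^ 3)
              - 2 * real n ^ 3 - 3 * real n ^ 2) / 27\<rfloor> \<longleftrightarrow> Y - 27 * real f \<ge> - (2 * S)"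
    unfolding le_floor_iff S_def D_def Y_def by (simp add: field_simps)
  have r3: "int f \<ge> \<lceil>((9 * real n + 18) * real h + 20 + 12 * real n
              - 2 * sqrt ((real n ^ 2 + real n - 2 - 3 * real h) ^ 3)
              - 2 * real n ^ 3 - 3 * real n ^ 2) / 27\<rceil> \<longleftrightarrow> Y - 27 * real f \<le> 2 * S"
    unfolding ceiling_le_iff S_def D_def Y_def by (simp add: field_simps)
  show ?thesis unfolding l r1 r2 r3 sqrt_cond S_def by auto
qed


definition Hj :: "4 \<Rightarrow> (real^4) set" where "Hj j = {x. x $ j = 0}"
definition Bex :: "(real^4) set set" where "Bex = range Hj"
definition aB :: "(real^4) set \<Rightarrow> real^4" where "aB H = axis (SOME j. H = Hj j) 1"

lemma Hj_alt: "Hj j = {x. axis j 1 \<bullet> x = 0}"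
  unfolding Hj_def by (simp add: inner_commute inner_axis)

lemma inj_Hj: "inj Hj"
proof (rule injI)
  fix j k assume e: "Hj j = Hj k"
  show "j = k"
  proof (rule ccontr)
    assume "j \<noteq> k"
    then have "(axis j 1 :: real^4) \<in> Hj k" by (simp add: Hj_def axis_def)
    moreover have "(axis j 1 :: real^4) \<notin> Hj j" by (simp add: Hj_def axis_def)
    ultimately show False using e by simp
  qed
qed

lemma aB_Hj: "aB (Hj j) = axis j 1"
proof -
  have "(SOME k. Hj j = Hj k) = j"
  proof (rule some_equality)
    show "Hj j = Hj j" ..
    fix k assume "Hj j = Hj k"
    then show "k = j" using inj_Hj by (metis injD)
  qed
  then show ?thesis by (simp add: aB_def)
qed

lemma aB_ok: "H \<in> Bex \<Longrightarrow> aB H \<noteq> 0 \<and> H = {x. aB H \<bullet> x = 0}"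
  unfolding Bex_def using aB_Hj Hj_alt by (auto simp: axis_eq_0_iff)

lemma Bex_arr: "is_arrangement Bex"
  unfolding is_arrangement_def
proof (intro conjI)
  show "finite Bex" unfolding Bex_def by simp
  show "\<forall>H\<in>Bex. \<exists>a. a \<noteq> 0 \<and> H = {x. a \<bullet> x = 0}" using aB_ok by blast
  show "\<Inter>Bex = {0}"
  proof
    show "\<Inter>Bex \<subseteq> {0}"
    proof
      fix x :: "real^4" assume "x \<in> \<Inter>Bex"
      then have "\<forall>j. x $ j = 0" unfolding Bex_def Hj_def by auto
      then show "x \<in> {0}" by (simp add: vec_eq_iff)
    qed
    show "{0} \<subseteq> \<Inter>Bex" unfolding Bex_def Hj_def by auto
  qed
qed

interpretation ex: arr Bex aB
  using Bex_arr aB_ok by unfold_locales auto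

lemma card_Bex: "card Bex = 4"
  unfolding Bex_def using inj_Hj by (simp add: card_image)

lemma sv_Bex: "sv UNIV Bex aB = PiE Bex (\<lambda>_. {-1, 1})"
proof
  show "sv UNIV Bex aB \<subseteq> PiE Bex (\<lambda>_. {-1, 1})"
    by (auto simp: sv_def sig_def sgn_real_def split: if_splits)
  show "PiE Bex (\<lambda>_. {-1, 1}) \<subseteq> sv UNIV Bex aB"
  proof
    fix \<sigma> assume s: "\<sigma> \<in> PiE Bex (\<lambda>_. {-1, 1::real})"
    define x :: "real^4" where "x = (\<chi> j. \<sigma> (Hj j))"
    have ax: "aB H \<bullet> x = \<sigma> H" if "H \<in> Bex" for H
      using that unfolding Bex_def x_def by (auto simp: aB_Hj inner_axis')
    have nz: "\<forall>K\<in>Bex. aB K \<bullet> x \<noteq> 0" using s ax by (auto simp: PiE_iff)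
    have "sig aB Bex x = \<sigma>"
    proof
      fix H show "sig aB Bex x H = \<sigma> H"
      proof (cases "H \<in> Bex")
        case True
        then have "\<sigma> H \<in> {-1, 1}" using s by (auto simp: PiE_iff)
        then show ?thesis using True ax by (auto simp: sig_def)
      next
        case False
        then show ?thesis using s by (auto simp: sig_def PiE_iff extensional_def)
      qed
    qed
    then show "\<sigma> \<in> sv UNIV Bex aB" using nz unfolding sv_def by (auto intro!: image_eqI[of _ _ x])
  qed
qed

lemma f3_Bex: "f3 Bex = 8"
proof -
  have "card (sv UNIV Bex aB) = 16"
    unfolding sv_Bex using ex.finA card_Bex by (simp add: card_PiE numeral_eq_Suc)
  then show ?thesis using ex.two_f3 by simp
qed

lemma Inter_Hj: "\<Inter>(Hj ` J) = {x::real^4. \<forall>i. i \<notin> - J \<longrightarrow> x $ i = 0}"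
  unfolding Hj_def by auto

lemma dim_Inter_Hj: "dim (\<Inter>(Hj ` J)) = 4 - card J"
proof -
  have "dim (\<Inter>(Hj ` J)) = card (- J)"
    unfolding Inter_Hj dim_vec_eq[symmetric] by (rule dim_substandard_cart)
  also have "\<dots> = card (UNIV - J)" by (simp add: Compl_eq_Diff_UNIV)
  also have "\<dots> = 4 - card J" by (subst card_Diff_subset) auto
  finally show ?thesis .
qed

lemma W2_Bex: "ex.W 2 = 6"
proof -
  have PB: "Pow Bex = image Hj ` Pow UNIV"
  proof
    show "Pow Bex \<subseteq> image Hj ` Pow UNIV"
    proof
      fix S assume "S \<in> Pow Bex"
      then have "S = Hj ` {j. Hj j \<in> S}" unfolding Bex_def by auto
      then show "S \<in> image Hj ` Pow UNIV" by blast
    qed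
  qed (auto simp: Bex_def)
  have inj: "inj_on (image Hj) (Pow UNIV)"
    using inj_Hj by (simp add: inj_on_def inj_image_eq_iff)
  have "ex.W 2 = (\<Sum>J\<in>Pow (UNIV :: 4 set). if dim (\<Inter>(Hj ` J)) = 2 then (-1::int)^card (Hj ` J) else 0)"
    unfolding ex.W_def PB sum.reindex[OF inj] by simp
  also have "\<dots> = (\<Sum>J\<in>Pow (UNIV :: 4 set). if card J = 2 then 1 else 0)"
  proof (rule sum.cong[OF refl])
    fix J :: "4 set"
    have cJ: "card J \<le> 4" using card_mono[of "UNIV :: 4 set" J] by simp
    have "card (Hj ` J) = card J" by (rule card_image[OF inj_on_subset[OF inj_Hj subset_UNIV]])
    then show "(if dim (\<Inter>(Hj ` J)) = 2 then (-1::int)^card (Hj ` J) else 0) = (if card J = 2 then 1 else 0)"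
      using cJ unfolding dim_Inter_Hj by auto
  qed
  also have "\<dots> = int (card {J. J \<subseteq> (UNIV :: 4 set) \<and> card J = 2})"
    by (simp add: sum.If_cases Int_def)
  also have "\<dots> = int (CARD(4) choose 2)" by (subst n_subsets) auto
  also have "\<dots> = 6" by (simp add: numeral_eq_Suc)
  finally show ?thesis .
qed

lemma k_Bex: "(\<Sum>i\<in>{2..card Bex}. (i - 1) * h_count Bex i) = 6"
proof -
  have "int (\<Sum>i\<in>{2..card Bex}. (i - 1) * h_count Bex i) = 6"
    using ex.W2_h[symmetric] W2_Bex by (rule trans)
  then show ?thesis by arith
qed


context arr
begin

lemma part1:
  "char_poly A = [:-1, 1:] *
        [: real (\<Sum>i\<in>{2..card A}. (i - 1) * h_count A i) + 1 - real (f3 A),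
           real (\<Sum>i\<in>{2..card A}. (i - 1) * h_count A i) + 1 - real (card A), 1 - real (card A), 1 :]"
proof -
  define hh where "hh = (\<Sum>i\<in>{2..card A}. (i - 1) * h_count A i)"
  have w2: "real_of_int (W 2) = real hh" using W2_h unfolding hh_def by simp
  have w3: "real_of_int (W 3) = - real (card A)" using W3 by simp
  have w4: "real_of_int (W 4) = 1" using W4 by simp
  have e1: "real_of_int (W 0) + real_of_int (W 1) + real_of_int (W 2) + real_of_int (W 3) + real_of_int (W 4) = 0"
    using cp_1 unfolding cp_explicit by simp
  have e2: "real_of_int (W 0) - real_of_int (W 1) + real_of_int (W 2) - real_of_int (W 3) + real_of_int (W 4) = 2 * real (f3 A)"
    using cp_m1 unfolding cp_explicit by simp
  have "char_poly A = [:of_int (W 0), of_int (W 1), of_int (W 2), of_int (W 3), of_int (W 4):]"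
    by (rule cp_explicit)
  also have "\<dots> = [:- (real hh + 1 - real (f3 A)), (real hh + 1 - real (f3 A)) - (real hh + 1 - real (card A)),
       (real hh + 1 - real (card A)) - (1 - real (card A)), (1 - real (card A)) - 1, 1:]"
    using w2 w3 w4 e1 e2 by simp linarith?
  also have "\<dots> = [:-1, 1:] * [: real hh + 1 - real (f3 A), real hh + 1 - real (card A), 1 - real (card A), 1 :]"
    by (rule pcons_test[symmetric])
  finally show ?thesis unfolding hh_def .
qed

lemma restr_identity:
  "int (\<Sum>i\<in>{2..card A}. (i - 1) * h_count A i) = (\<Sum>H\<in>A. int (restr_card A H)) - int (\<Sum>i\<in>{2..card A}. h_count A i)"
proof -
  have "int (\<Sum>i\<in>{2..card A}. (i - 1) * h_count A i) = W 2" using W2_h by simp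
  also have "\<dots> = (\<Sum>X\<in>lines A. int (weight A X) - 1)"
    unfolding W2_lines using mw_line by (intro sum.cong) auto
  also have "\<dots> = (\<Sum>X\<in>lines A. int (weight A X)) - int (card (lines A))"
    by (simp add: sum_subtractf)
  also have "(\<Sum>X\<in>lines A. int (weight A X)) = (\<Sum>H\<in>A. int (restr_card A H))"
    using restr_sum by (metis of_nat_sum)
  finally show ?thesis using g1_lines by simp
qed

end


theorem theorem1:
  fixes A :: "(real^4) set set" and n h g1 :: nat
  assumes arr: "is_arrangement A"
    and n_def: "n = card A"
    and h_def: "h = (\<Sum>i\<in>{2..n}. (i - 1) * h_count A i)"
    and g1_def: "g1 = (\<Sum>i\<in>{2..n}. h_count A i)"
  shows
   "char_poly A = [:-1, 1:] *
        [: real h + 1 - real (f3 A), real h + 1 - real n, 1 - real n, 1 :]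
    \<and>
    ((\<forall>z::complex. poly (map_poly complex_of_real (char_poly A)) z = 0 \<longrightarrow> z \<in> \<real>)
     \<longleftrightarrow>
      ((int h = (\<Sum>H\<in>A. int (restr_card A H)) - int g1
        \<and> int h \<le> \<lfloor>(real n + 2) * (real n - 1) / 3\<rfloor>)
       \<and> int (f3 A) \<le> \<lfloor>((9 * real n + 18) * real h + 20 + 12 * real n
              + 2 * sqrt ((real n ^ 2 + real n - 2 - 3 * real h) ^ 3)
              - 2 * real n ^ 3 - 3 * real n ^ 2) / 27\<rfloor>
       \<and> int (f3 A) \<ge> \<lceil>((9 * real n + 18) * real h + 20 + 12 * real n
              - 2 * sqrt ((real n ^ 2 + real n - 2 - 3 * real h) ^ 3)
              - 2 * real n ^ 3 - 3 * real n ^ 2) / 27\<rceil>))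
    \<and>
    (\<exists>B :: (real^4) set set. is_arrangement B \<and>
       (let m = card B; k = (\<Sum>i\<in>{2..m}. (i - 1) * h_count B i) in
         int k = \<lfloor>(real m + 2) * (real m - 1) / 3\<rfloor>
         \<and> int (f3 B) = \<lfloor>((9 * real m + 18) * real k + 20 + 12 * real m
              + 2 * sqrt ((real m ^ 2 + real m - 2 - 3 * real k) ^ 3)
              - 2 * real m ^ 3 - 3 * real m ^ 2) / 27\<rfloor>
         \<and> int (f3 B) = \<lceil>((9 * real m + 18) * real k + 20 + 12 * real m
              - 2 * sqrt ((real m ^ 2 + real m - 2 - 3 * real k) ^ 3)
              - 2 * real m ^ 3 - 3 * real m ^ 2) / 27\<rceil>))"
proof -
  have "\<forall>H\<in>A. \<exists>a::real^4. a \<noteq> 0 \<and> H = {x. a \<bullet> x = 0}" using arr by (simp add: is_arrangement_def)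
  then obtain a where aH: "\<forall>H\<in>A. a H \<noteq> 0 \<and> H = {x. a H \<bullet> x = 0}" by (metis bchoice)
  interpret arr A a using arr aH by unfold_locales auto
  have P1: "char_poly A = [:-1, 1:] *
        [: real h + 1 - real (f3 A), real h + 1 - real n, 1 - real n, 1 :]"
    unfolding h_def n_def by (rule part1)
  define b where "b = 1 - real n"
  define c where "c = real h + 1 - real n"
  define d where "d = real h + 1 - real (f3 A)"
  have P1': "char_poly A = [:- d, d - c, c - b, b - 1, 1:]"
    unfolding P1 pcons_test b_def c_def d_def by simp
  have pz: "poly (map_poly complex_of_real (char_poly A)) z = (z - 1) * (z^3 + of_real b * z^2 + of_real c * z + of_real d)" for z
    unfolding P1' by (simp add: map_poly_pCons algebra_simps power2_eq_square power3_eq_cube)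
  have roots: "(\<forall>z::complex. poly (map_poly complex_of_real (char_poly A)) z = 0 \<longrightarrow> z \<in> \<real>)
      \<longleftrightarrow> (\<forall>z::complex. z^3 + of_real b * z^2 + of_real c * z + of_real d = 0 \<longrightarrow> z \<in> \<real>)"
    unfolding pz by auto
  have ident: "int h = (\<Sum>H\<in>A. int (restr_card A H)) - int g1"
    unfolding h_def g1_def n_def by (rule restr_identity)
  have P2: "(\<forall>z::complex. poly (map_poly complex_of_real (char_poly A)) z = 0 \<longrightarrow> z \<in> \<real>)
     \<longleftrightarrow>
      ((int h = (\<Sum>H\<in>A. int (restr_card A H)) - int g1
        \<and> int h \<le> \<lfloor>(real n + 2) * (real n - 1) / 3\<rfloor>)
       \<and> int (f3 A) \<le> \<lfloor>((9 * real n + 18) * real h + 20 + 12 * real n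
              + 2 * sqrt ((real n ^ 2 + real n - 2 - 3 * real h) ^ 3)
              - 2 * real n ^ 3 - 3 * real n ^ 2) / 27\<rfloor>
       \<and> int (f3 A) \<ge> \<lceil>((9 * real n + 18) * real h + 20 + 12 * real n
              - 2 * sqrt ((real n ^ 2 + real n - 2 - 3 * real h) ^ 3)
              - 2 * real n ^ 3 - 3 * real n ^ 2) / 27\<rceil>)"
    unfolding roots cubic_crit using ii_arith[of n h "f3 A"] ident unfolding b_def c_def d_def by simp
  have P3: "\<exists>B :: (real^4) set set. is_arrangement B \<and>
       (let m = card B; k = (\<Sum>i\<in>{2..m}. (i - 1) * h_count B i) in
         int k = \<lfloor>(real m + 2) * (real m - 1) / 3\<rfloor>
         \<and> int (f3 B) = \<lfloor>((9 * real m + 18) * real k + 20 + 12 * real m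
              + 2 * sqrt ((real m ^ 2 + real m - 2 - 3 * real k) ^ 3)
              - 2 * real m ^ 3 - 3 * real m ^ 2) / 27\<rfloor>
         \<and> int (f3 B) = \<lceil>((9 * real m + 18) * real k + 20 + 12 * real m
              - 2 * sqrt ((real m ^ 2 + real m - 2 - 3 * real k) ^ 3)
              - 2 * real m ^ 3 - 3 * real m ^ 2) / 27\<rceil>)"
  proof (intro exI[of _ Bex] conjI)
    show "is_arrangement Bex" by (rule Bex_arr)
    show "let m = card Bex; k = (\<Sum>i\<in>{2..m}. (i - 1) * h_count Bex i) in
         int k = \<lfloor>(real m + 2) * (real m - 1) / 3\<rfloor>
         \<and> int (f3 Bex) = \<lfloor>((9 * real m + 18) * real k + 20 + 12 * real m
              + 2 * sqrt ((real m ^ 2 + real m - 2 - 3 * real k) ^ 3)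
              - 2 * real m ^ 3 - 3 * real m ^ 2) / 27\<rfloor>
         \<and> int (f3 Bex) = \<lceil>((9 * real m + 18) * real k + 20 + 12 * real m
              - 2 * sqrt ((real m ^ 2 + real m - 2 - 3 * real k) ^ 3)
              - 2 * real m ^ 3 - 3 * real m ^ 2) / 27\<rceil>"
      unfolding Let_def
      unfolding k_Bex
      unfolding card_Bex f3_Bex
      by simp
  qed
  show ?thesis using P1 P2 P3 by blast
qed


end
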